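(* Let $d\ge 3$ and $0\le j\le \left\lfloor \frac{3(d-1)}{2}\right\rfloor$. Then the multiplicity of the standard representation in $\operatorname{Ker}(E)\cap A(d)_j$ is $$\operatorname{st}(d,j)=\tfrac12\big(\operatorname{mult}(d,j)-\operatorname{triv}(d,j)-\operatorname{sign}(d,j)\big),$$ where $\operatorname{mult}(d,j)=j+1$ if $0\le j\le d-1$, $\operatorname{mult}(d,j)=3d-2-2j$ if $d\le j\le \lfloor 3(d-1)/2\rfloor$, $\operatorname{triv}(d,j)=p_{3,d-1}(j)-p_{3,d-1}(j-1)$ and $\operatorname{sign}(d,j)=p^+_{3,d-1}(j)-p^+_{3,d-1}(j-1)$.
   Context: $\Bbbk$ is an algebraically closed field of characteristic $0$. For an integer $d\ge 1$, $A(d)=\Bbbk[x_1,x_2,x_3]/(x_1^d,x_2^d,x_3^d)=\bigoplus_j A(d)_j$ with its standard grading. $S_3$ acts on $A(d)$ by permuting the variables. The linear map $E:A(d)_{j+1}\to A(d)_j$ is defined on the monomial basis by $E(x_1^{a_1}x_2^{a_2}x_3^{a_3})=\sum_{k=1}^{3} a_k(d-a_k)\,x_1^{a_1}\cdots x_k^{a_k-1}\cdots x_3^{a_3}$; it commutes with the $S_3$-action. The standard representation of $S_3$ is the $2$-dimensional irreducible representation (Specht module for the partition $(2,1)$); $\operatorname{st}(d,j)$ denotes its multiplicity in $\operatorname{Ker}(E)\cap A(d)_j$. For integers $l\ge0$, $n$: $p_{3,l}(n)$ is the number of integer triples $(a,b,c)$ with $l\ge a\ge b\ge c\ge 0$,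 $a+b+c=n$, and $p^+_{3,l}(n)$ is the number with $l\ge a>b>c\ge 0$, $a+b+c=n$ (both $0$ for $n<0$). *)

theory Defs
  imports Main "HOL-Combinatorics.Permutations" "HOL-Computational_Algebra.Polynomial" "HOL-Library.Function_Algebras"
begin

text \<open>Algebraically closed field (characteristic 0 is imposed via the class field_char_0).\<close>
definition alg_closed :: "'k::field itself \<Rightarrow> bool" where
  "alg_closed _ \<longleftrightarrow> (\<forall>p::'k poly. degree p > 0 \<longrightarrow> (\<exists>x. poly p x = 0))"

text \<open>Exponent vectors of monomials x1^a1 x2^a2 x3^a3 are functions e :: nat => nat with
  e i = 0 for i >= 3 (variables indexed 0,1,2).  An element of A(d) is given by its
  coefficient function on such exponent vectors; A(d)_j is the graded piece.\<close>
definition is_mono :: "nat \<Rightarrow> (nat \<Rightarrow> nat) \<Rightarrow> bool" where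
  "is_mono d e \<longleftrightarrow> (\<forall>i\<ge>3. e i = 0) \<and> (\<forall>i<3. e i < d)"

definition Agr :: "nat \<Rightarrow> nat \<Rightarrow> ((nat \<Rightarrow> nat) \<Rightarrow> 'k::field) set" where
  "Agr d j = {f. \<forall>e. f e \<noteq> 0 \<longrightarrow> is_mono d e \<and> e 0 + e 1 + e 2 = j}"

text \<open>S3 acting by permuting variables: sigma sends x_i to x_(sigma i), so the
  monomial with exponent e goes to the one with exponent e o inv sigma.\<close>
definition actA :: "(nat \<Rightarrow> nat) \<Rightarrow> ((nat \<Rightarrow> nat) \<Rightarrow> 'k::field) \<Rightarrow> ((nat \<Rightarrow> nat) \<Rightarrow> 'k)" where
  "actA \<sigma> f = (\<lambda>e. f (e \<circ> \<sigma>))"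

text \<open>E(x^a) = sum_k a_k (d - a_k) x^(a - e_k), written on coefficients.\<close>
definition Emap :: "nat \<Rightarrow> ((nat \<Rightarrow> nat) \<Rightarrow> 'k::field) \<Rightarrow> ((nat \<Rightarrow> nat) \<Rightarrow> 'k)" where
  "Emap d f = (\<lambda>b. \<Sum>k<3. of_nat ((b k + 1) * (d - (b k + 1))) * f (b(k := b k + 1)))"

definition KerE :: "nat \<Rightarrow> nat \<Rightarrow> ((nat \<Rightarrow> nat) \<Rightarrow> 'k::field) set" where
  "KerE d j = {f \<in> Agr d j. Emap d f = (\<lambda>_. 0)}"

text \<open>The standard representation: the Specht module S^(2,1), realised as
  {v in k^3 | v0+v1+v2 = 0} with S3 permuting coordinates.\<close>
definition StdRep :: "(nat \<Rightarrow> 'k::field) set" where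
  "StdRep = {v. (\<forall>i\<ge>3. v i = 0) \<and> v 0 + v 1 + v 2 = 0}"

definition actV :: "(nat \<Rightarrow> nat) \<Rightarrow> (nat \<Rightarrow> 'k::field) \<Rightarrow> (nat \<Rightarrow> 'k)" where
  "actV \<sigma> v = (\<lambda>i. v (inv \<sigma> i))"

text \<open>Hom_{S3}(StdRep, W): S3-equivariant linear maps StdRep -> W (extended by 0
  outside StdRep, so that they form a k-vector space).\<close>
definition HomS3 :: "((nat \<Rightarrow> nat) \<Rightarrow> 'k::field) set \<Rightarrow> ((nat \<Rightarrow> 'k) \<Rightarrow> ((nat \<Rightarrow> nat) \<Rightarrow> 'k)) set" where
  "HomS3 W = {\<phi>.
     (\<forall>v\<in>StdRep. \<phi> v \<in> W) \<and>
     (\<forall>v. v \<notin> StdRep \<longrightarrow> \<phi> v = (\<lambda>_. 0)) \<and>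
     (\<forall>v\<in>StdRep. \<forall>w\<in>StdRep. \<phi> (\<lambda>i. v i + w i) = (\<lambda>e. \<phi> v e + \<phi> w e)) \<and>
     (\<forall>c. \<forall>v\<in>StdRep. \<phi> (\<lambda>i. c * v i) = (\<lambda>e. c * \<phi> v e)) \<and>
     (\<forall>\<sigma>. \<sigma> permutes {..<3} \<longrightarrow> (\<forall>v\<in>StdRep. \<phi> (actV \<sigma> v) = actA \<sigma> (\<phi> v)))}"

text \<open>Multiplicity of the irreducible standard representation in W = dim_k Hom_{S3}(StdRep, W).\<close>
definition st :: "'k::field itself \<Rightarrow> nat \<Rightarrow> nat \<Rightarrow> nat" where
  "st _ d j = vector_space.dim (\<lambda>(c::'k) \<phi>. \<lambda>v e. c * \<phi> v e) (HomS3 (KerE d j :: ((nat \<Rightarrow> nat) \<Rightarrow> 'k) set))"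

definition p3 :: "nat \<Rightarrow> int \<Rightarrow> nat" where
  "p3 l n = card {(a,b,c). a \<le> (l::nat) \<and> (b::nat) \<le> a \<and> (c::nat) \<le> b \<and> int (a+b+c) = n}"

definition p3plus :: "nat \<Rightarrow> int \<Rightarrow> nat" where
  "p3plus l n = card {(a,b,c). a \<le> (l::nat) \<and> (b::nat) < a \<and> (c::nat) < b \<and> int (a+b+c) = n}"

definition mult :: "nat \<Rightarrow> nat \<Rightarrow> int" where
  "mult d j = (if j \<le> d - 1 then int j + 1 else 3 * int d - 2 - 2 * int j)"

definition triv :: "nat \<Rightarrow> nat \<Rightarrow> int" where
  "triv d j = int (p3 (d-1) (int j)) - int (p3 (d-1) (int j - 1))"

definition sgn_mult :: "nat \<Rightarrow> nat \<Rightarrow> int" where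
  "sgn_mult d j = int (p3plus (d-1) (int j)) - int (p3plus (d-1) (int j - 1))"

end

theory Submission
  imports Defs
begin

context vector_space_pair begin

lemma dim_image_eq':
  assumes lf: "Vector_Spaces.linear s1 s2 f"
    and fi: "inj_on f (vs1.span S)"
  shows "vs2.dim (f ` S) = vs1.dim S"
proof -
  interpret lf: Vector_Spaces.linear s1 s2 f by fact
  obtain B where B: "B \<subseteq> S" "vs1.independent B" "S \<subseteq> vs1.span B" "card B = vs1.dim S"
    using vs1.basis_exists[of S] by auto
  then have "vs1.span S = vs1.span B"
    using vs1.span_mono[of B S] vs1.span_mono[of S "vs1.span B"] vs1.span_span[of B] by auto
  moreover have "card (f ` B) = card B"
    using assms card_image[of f B] inj_on_subset[of f "vs1.span S" B] B vs1.span_superset by auto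
  moreover have "(f ` B) \<subseteq> (f ` S)"
    using B by auto
  ultimately show ?thesis
    by (metis B(2) B(4) fi lf.dependent_inj_imageD lf.span_image vs2.dim_eq_card_independent vs2.dim_span)
qed

lemma span_disjoint_parts:
  assumes "finite D" "vs1.independent C" "D \<subseteq> C" "B \<subseteq> C" "B \<inter> D = {}"
    "x \<in> vs1.span D" "x \<in> vs1.span B"
  shows "x = 0"
  using assms
proof (induction D arbitrary: x rule: finite_induct)
  case empty then show ?case by auto
next
  case (insert a D x)
  from vs1.span_breakdown[of a "insert a D", simplified, OF insert.prems(5)]
  obtain k where k: "x - s1 k a \<in> vs1.span (D - {a})" by blast
  have kD: "x - s1 k a \<in> vs1.span D"
    using k vs1.span_mono[of "D - {a}" D] by blast
  show ?case
  proof (cases "k = 0")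
    case True
    then show ?thesis using insert kD by auto
  next
    case False
    have "s1 k a = x - (x - s1 k a)" by simp
    also have "\<dots> \<in> vs1.span (B \<union> D)"
      using insert.prems(6) kD vs1.span_mono[of B "B \<union> D"] vs1.span_mono[of D "B \<union> D"]
      by (meson subsetD sup_ge1 sup_ge2 vs1.span_diff)
    finally have "s1 (inverse k) (s1 k a) \<in> vs1.span (B \<union> D)"
      using vs1.span_scale by blast
    then have "a \<in> vs1.span (B \<union> D)" using False by simp
    moreover have "B \<union> D \<subseteq> C - {a}" using insert by auto
    ultimately have "a \<in> vs1.span (C - {a})" using vs1.span_mono by blast
    then have "vs1.dependent C" using insert.prems vs1.dependent_def by auto
    then show ?thesis using insert.prems by auto
  qed
qed

lemma rank_nullity_onto:
  assumes lf: "Vector_Spaces.linear s1 s2 f" and S: "vs1.subspace S" and A: "finite A" "S \<subseteq> vs1.span A"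
    and fS: "f ` S = T"
  shows "vs1.dim S = vs1.dim {x\<in>S. f x = 0} + vs2.dim T"
proof -
  interpret lf: Vector_Spaces.linear s1 s2 f by fact
  define K where "K = {x\<in>S. f x = 0}"
  obtain B where B: "B \<subseteq> K" "vs1.independent B" "K \<subseteq> vs1.span B" "card B = vs1.dim K"
    using vs1.basis_exists[of K] by auto
  have BS: "B \<subseteq> S" using B K_def by auto
  obtain C where C: "B \<subseteq> C" "C \<subseteq> S" "vs1.independent C" "S \<subseteq> vs1.span C"
    using vs1.maximal_independent_subset_extend[OF BS B(2)] by blast
  have fC: "finite C" using vs1.independent_span_bound[OF A(1) C(3)] C(2) A(2) by auto
  define D where "D = C - B"
  have fD: "finite D" using fC D_def by auto
  have spanD: "vs1.span D \<subseteq> S" using C(2) D_def vs1.span_minimal[OF _ S, of D] by auto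
  have injD: "inj_on f (vs1.span D)"
  proof (rule inj_onI)
    fix x y assume x: "x \<in> vs1.span D" and y: "y \<in> vs1.span D" and e: "f x = f y"
    have "x - y \<in> vs1.span D" using x y vs1.span_diff by blast
    moreover have "f (x - y) = 0" using e lf.diff by simp
    ultimately have "x - y \<in> K" using spanD K_def by auto
    then have "x - y \<in> vs1.span B" using B by auto
    then have "x - y = 0"
      using span_disjoint_parts[OF fD C(3), of B "x - y"] \<open>x - y \<in> vs1.span D\<close> D_def C(1) by auto
    then show "x = y" by simp
  qed
  have "vs2.dim (f ` D) = vs1.dim D" using dim_image_eq'[OF lf injD] .
  also have "vs1.dim D = card D"
    using vs1.dim_eq_card_independent vs1.independent_mono[OF C(3)] D_def by auto
  finally have dD: "vs2.dim (f ` D) = card D" .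
  have "T \<subseteq> vs2.span (f ` D)"
  proof
    fix y assume "y \<in> T"
    then obtain x where x: "x \<in> S" "y = f x" using fS by auto
    then have "x \<in> vs1.span C" using C by auto
    then have "f x \<in> vs2.span (f ` C)" using lf.span_image by auto
    moreover have "f ` C \<subseteq> insert 0 (f ` D)" using B K_def D_def by auto
    ultimately have "f x \<in> vs2.span (insert 0 (f ` D))" using vs2.span_mono by blast
    then show "y \<in> vs2.span (f ` D)" using x by simp
  qed
  moreover have "f ` D \<subseteq> T" using fS C(2) D_def by auto
  moreover have "vs2.subspace T" using fS lf.subspace_image[OF S] by simp
  ultimately have "vs2.span (f ` D) = T" using vs2.span_subspace by blast
  then have "vs2.dim T = card D" using dD vs2.dim_span by metis
  moreover have "vs1.dim S = card C"
    using vs1.basis_card_eq_dim[OF C(2) C(4) C(3)] by simp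
  moreover have "card C = card B + card D"
    using fC C(1) D_def by (metis card_Diff_subset finite_subset add_diff_inverse_nat card_mono not_less)
  ultimately show ?thesis using B(4) K_def by simp
qed

end

context vector_space begin

lemma inj_endo_onto:
  assumes lf: "Vector_Spaces.linear scale scale f" and S: "subspace S" and A: "finite A" "S \<subseteq> span A"
    and inj: "inj_on f S" and sub: "f ` S \<subseteq> S"
  shows "f ` S = S"
proof -
  interpret lf: Vector_Spaces.linear scale scale f by fact
  obtain B where B: "B \<subseteq> S" "independent B" "S \<subseteq> span B" "card B = dim S"
    using basis_exists[of S] by auto
  have fB: "finite B" using independent_span_bound[OF A(1) B(2)] B(1) A(2) by auto
  have spB: "span B = S" using span_subspace[OF B(1) B(3) S] .
  have ind: "independent (f ` B)"
    using lf.independent_injective_image[OF B(2)] inj spB by auto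
  have cfB: "card (f ` B) = card B"
    using card_image inj_on_subset[OF inj B(1)] by auto
  have "S \<subseteq> span (f ` B)"
  proof (rule ccontr)
    assume "\<not> S \<subseteq> span (f ` B)"
    then obtain x where x: "x \<in> S" "x \<notin> span (f ` B)" by auto
    have i2: "independent (insert x (f ` B))" using independent_insertI[OF x(2) ind] .
    have "insert x (f ` B) \<subseteq> span B" using x sub B spB by auto
    then have "card (insert x (f ` B)) \<le> card B" using independent_span_bound[OF fB i2] by auto
    moreover have "x \<notin> f ` B" using x(2) span_superset[of "f ` B"] by blast
    ultimately show False using cfB fB by simp
  qed
  then have "S \<subseteq> f ` span B" using lf.span_image by auto
  then show ?thesis using spB sub by auto
qed

end

definition mk :: "nat \<Rightarrow> nat \<Rightarrow> nat \<Rightarrow> nat \<Rightarrow> nat" where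
  "mk a b c = (\<lambda>i. if i = 0 then a else if i = 1 then b else if i = 2 then c else 0)"

lemma mk_app[simp]: "mk a b c 0 = a" "mk a b c (Suc 0) = b" "mk a b c 2 = c"
  by (auto simp: mk_def)

lemma mk_upd[simp]: "(mk a b c)(0 := v) = mk v b c" "(mk a b c)(Suc 0 := v) = mk a v c"
  "(mk a b c)(2 := v) = mk a b v"
  by (auto simp: mk_def fun_eq_iff)

lemma mk_inj[simp]: "mk a b c = mk a' b' c' \<longleftrightarrow> a = a' \<and> b = b' \<and> c = c'"
proof
  assume "mk a b c = mk a' b' c'"
  then have "mk a b c 0 = mk a' b' c' 0" "mk a b c 1 = mk a' b' c' 1" "mk a b c 2 = mk a' b' c' 2" by auto
  then show "a = a' \<and> b = b' \<and> c = c'" by simp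
qed simp

lemma is_mono_mk[simp]: "is_mono d (mk a b c) \<longleftrightarrow> a < d \<and> b < d \<and> c < d"
proof
  assume "is_mono d (mk a b c)"
  then have "\<forall>i<3. mk a b c i < d" by (simp add: is_mono_def)
  then have "mk a b c 0 < d" "mk a b c (Suc 0) < d" "mk a b c 2 < d" by (auto simp del: mk_app)
  then show "a < d \<and> b < d \<and> c < d" by simp
next
  assume "a < d \<and> b < d \<and> c < d"
  then show "is_mono d (mk a b c)" unfolding is_mono_def mk_def
    by (auto simp: less_Suc_eq numeral_3_eq_3)
qed

lemma mono_eq_mk: "is_mono d e \<Longrightarrow> e = mk (e 0) (e 1) (e 2)"
  by (auto simp: is_mono_def mk_def fun_eq_iff)

lemma sum3: "(\<Sum>k<3. g k) = g 0 + g (Suc 0) + g 2"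
  by (simp add: numeral_3_eq_3 lessThan_Suc add.commute add.left_commute numeral_2_eq_2)

definition cE :: "nat \<Rightarrow> nat \<Rightarrow> 'k::field" where
  "cE d t = of_nat ((t + 1) * (d - (t + 1)))"

lemma Emap_mk: "Emap d g (mk x y z) = cE d x * g (mk (x+1) y z) + cE d y * g (mk x (y+1) z)
   + cE d z * g (mk x y (z+1))"
  by (simp add: Emap_def sum3 cE_def)

definition Lmap :: "nat \<Rightarrow> ((nat \<Rightarrow> nat) \<Rightarrow> 'k::field) \<Rightarrow> ((nat \<Rightarrow> nat) \<Rightarrow> 'k)" where
  "Lmap d f = (\<lambda>b. if is_mono d b then (\<Sum>k<3. if 0 < b k then f (b(k := b k - 1)) else 0) else 0)"

lemma Lmap_mk: "Lmap d g (mk x y z) = (if x < d \<and> y < d \<and> z < d then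
   (if 0 < x then g (mk (x-1) y z) else 0) + (if 0 < y then g (mk x (y-1) z) else 0)
   + (if 0 < z then g (mk x y (z-1)) else 0) else 0)"
  by (simp add: Lmap_def sum3)

lemma cE_zero: "d \<le> x + 1 \<Longrightarrow> cE d x = 0"
  by (simp add: cE_def)

lemma cE_diff: assumes "x < d"
  shows "(cE d x :: 'k::field) = (if 0 < x then cE d (x - 1) else 0) + of_int (int d - 1 - 2 * int x)"
proof -
  define r where "r = d - (x + 1)"
  have r: "d = x + 1 + r" using assms r_def by simp
  show ?thesis
  proof (cases x)
    case 0 then show ?thesis using r by (simp add: cE_def)
  next
    case (Suc x')
    have "int ((x+1)*(d-(x+1))) = int ((x-1+1)*(d-(x-1+1))) + (int d - 1 - 2 * int x)"
    proof -
      have a: "d - (x+1) = r" "d - (x-1+1) = r+1" "x - 1 + 1 = x" using r Suc by auto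
      show ?thesis unfolding a using r by (simp add: algebra_simps)
    qed
    then have "(of_int (int ((x+1)*(d-(x+1)))) :: 'k) = of_int (int ((x-1+1)*(d-(x-1+1)))) + of_int (int d - 1 - 2 * int x)"
      by (metis of_int_add)
    then have "(of_nat ((x+1)*(d-(x+1))) :: 'k) = of_nat ((x-1+1)*(d-(x-1+1))) + of_int (int d - 1 - 2 * int x)"
      by (simp only: of_int_of_nat_eq)
    then show ?thesis using Suc unfolding cE_def by simp
  qed
qed

lemma EL_mk: fixes f :: "(nat \<Rightarrow> nat) \<Rightarrow> 'k::field"
  assumes xyz: "x < d" "y < d" "z < d"
  shows "Emap d (Lmap d f) (mk x y z) = Lmap d (Emap d f) (mk x y z)
     + of_int (3 * (int d - 1) - 2 * int (x + y + z)) * f (mk x y z)"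
proof -
  have ex: "cE d x * Lmap d f (mk (x+1) y z) = cE d x * (f (mk x y z)
     + (if 0 < y then f (mk (x+1) (y-1) z) else 0) + (if 0 < z then f (mk (x+1) y (z-1)) else 0))"
    using xyz by (cases "x + 1 < d") (simp_all add: Lmap_mk cE_zero)
  have ey: "cE d y * Lmap d f (mk x (y+1) z) = cE d y * ((if 0 < x then f (mk (x-1) (y+1) z) else 0)
     + f (mk x y z) + (if 0 < z then f (mk x (y+1) (z-1)) else 0))"
    using xyz by (cases "y + 1 < d") (simp_all add: Lmap_mk cE_zero)
  have ez: "cE d z * Lmap d f (mk x y (z+1)) = cE d z * ((if 0 < x then f (mk (x-1) y (z+1)) else 0)
     + (if 0 < y then f (mk x (y-1) (z+1)) else 0) + f (mk x y z))"
    using xyz by (cases "z + 1 < d") (simp_all add: Lmap_mk cE_zero)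
  have lx: "(if 0 < x then Emap d f (mk (x-1) y z) else 0) = (if 0 < x then cE d (x-1) else 0) * f (mk x y z)
       + cE d y * (if 0 < x then f (mk (x-1) (y+1) z) else 0) + cE d z * (if 0 < x then f (mk (x-1) y (z+1)) else 0)"
    by (cases "0 < x") (simp_all add: Emap_mk)
  have ly: "(if 0 < y then Emap d f (mk x (y-1) z) else 0) = cE d x * (if 0 < y then f (mk (x+1) (y-1) z) else 0)
       + (if 0 < y then cE d (y-1) else 0) * f (mk x y z) + cE d z * (if 0 < y then f (mk x (y-1) (z+1)) else 0)"
    by (cases "0 < y") (simp_all add: Emap_mk)
  have lz: "(if 0 < z then Emap d f (mk x y (z-1)) else 0) = cE d x * (if 0 < z then f (mk (x+1) y (z-1)) else 0)
       + cE d y * (if 0 < z then f (mk x (y+1) (z-1)) else 0) + (if 0 < z then cE d (z-1) else 0) * f (mk x y z)"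
    by (cases "0 < z") (simp_all add: Emap_mk)
  have L: "Lmap d (Emap d f) (mk x y z) = (if 0 < x then Emap d f (mk (x-1) y z) else 0)
     + (if 0 < y then Emap d f (mk x (y-1) z) else 0) + (if 0 < z then Emap d f (mk x y (z-1)) else 0)"
    using xyz by (simp add: Lmap_mk)
  have dx: "(cE d x :: 'k) = (if 0 < x then cE d (x - 1) else 0) + of_int (int d - 1 - 2 * int x)"
    using cE_diff xyz by blast
  have dy: "(cE d y :: 'k) = (if 0 < y then cE d (y - 1) else 0) + of_int (int d - 1 - 2 * int y)"
    using cE_diff xyz by blast
  have dz: "(cE d z :: 'k) = (if 0 < z then cE d (z - 1) else 0) + of_int (int d - 1 - 2 * int z)"
    using cE_diff xyz by blast
  have num: "(of_int (3 * (int d - 1) - 2 * int (x + y + z)) :: 'k) =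
     of_int (int d - 1 - 2 * int x) + of_int (int d - 1 - 2 * int y) + of_int (int d - 1 - 2 * int z)"
    by simp
  show ?thesis
    unfolding L lx ly lz
    unfolding Emap_mk[of d "Lmap d f"] ex ey ez num
    unfolding dx dy dz
    by (simp add: algebra_simps split del: if_split)
qed


lemma Emap_eq: "Emap d f b = (\<Sum>k<3. cE d (b k) * f (b(k := b k + 1)))"
  by (simp add: Emap_def cE_def)

lemma Emap_add: "Emap d (f + g) = Emap d f + Emap d g"
  by (simp add: Emap_eq fun_eq_iff sum.distrib algebra_simps)

lemma Emap_scale: "Emap d (\<lambda>e. c * f e) = (\<lambda>e. c * Emap d f e)"
  by (simp add: Emap_eq fun_eq_iff sum_distrib_left algebra_simps)

lemma Lmap_add: "Lmap d (f + g) = Lmap d f + Lmap d g"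
  unfolding Lmap_def fun_eq_iff
  by (auto simp: sum.distrib[symmetric] intro!: sum.cong)

lemma Lmap_scale: "Lmap d (\<lambda>e. c * f e) = (\<lambda>e. c * Lmap d f e)"
  by (auto simp add: Lmap_def fun_eq_iff sum_distrib_left intro!: sum.cong)

lemma Emap_supp:
  assumes "\<And>e. g e \<noteq> 0 \<Longrightarrow> is_mono d e" "\<not> is_mono d b"
  shows "Emap d g b = 0"
proof -
  have "cE d (b k) * g (b(k := b k + 1)) = 0" if k: "k < 3" for k
  proof (rule ccontr)
    assume "cE d (b k) * g (b(k := b k + 1)) \<noteq> 0"
    then have c: "cE d (b k) \<noteq> (0::'a)" and g: "g (b(k := b k + 1)) \<noteq> 0" by auto
    have "b k + 1 < d" using c cE_zero[of d "b k"] by (cases "b k + 1 < d") auto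
    moreover have "is_mono d (b(k := b k + 1))" using assms(1) g by auto
    ultimately have "is_mono d b" using k unfolding is_mono_def
      by (auto split: if_splits)
    then show False using assms(2) by simp
  qed
  then show ?thesis unfolding Emap_eq by (intro sum.neutral) auto
qed

lemma Lmap_supp: "\<not> is_mono d b \<Longrightarrow> Lmap d g b = 0"
  by (simp add: Lmap_def)

lemma Agr_D: "f \<in> Agr d j \<Longrightarrow> f e \<noteq> 0 \<Longrightarrow> is_mono d e \<and> e 0 + e 1 + e 2 = j"
  by (auto simp: Agr_def)

lemma Agr_mk: "f \<in> Agr d j \<Longrightarrow> x + y + z \<noteq> j \<Longrightarrow> f (mk x y z) = 0"
  using Agr_D[of f d j "mk x y z"] by auto

lemma EL_comm: fixes f :: "(nat \<Rightarrow> nat) \<Rightarrow> 'k::field"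
  assumes f: "f \<in> Agr d m"
  shows "Emap d (Lmap d f) = (\<lambda>b. Lmap d (Emap d f) b + of_int (3 * (int d - 1) - 2 * int m) * f b)"
proof
  fix b
  show "Emap d (Lmap d f) b = Lmap d (Emap d f) b + of_int (3 * (int d - 1) - 2 * int m) * f b"
  proof (cases "is_mono d b")
    case False
    have "Emap d (Lmap d f) b = 0"
      by (rule Emap_supp[OF _ False]) (metis Lmap_supp)
    moreover have "f b = 0" using Agr_D[OF f] False by auto
    ultimately show ?thesis using False by (simp add: Lmap_supp)
  next
    case True
    then obtain x y z where b: "b = mk x y z" "x < d" "y < d" "z < d"
      by (metis mono_eq_mk is_mono_mk)
    have "of_int (3 * (int d - 1) - 2 * int (x + y + z)) * f (mk x y z)
        = (of_int (3 * (int d - 1) - 2 * int m) * f (mk x y z) :: 'k)"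
      by (cases "x + y + z = m") (simp_all add: Agr_mk[OF f])
    then show ?thesis using EL_mk[OF b(2-4), of f] b(1) by simp
  qed
qed


lemma Emap_Agr_D:
  assumes f: "f \<in> Agr d j" and nz: "Emap d f b \<noteq> 0"
  shows "is_mono d b \<and> b 0 + b 1 + b 2 + 1 = j"
proof -
  have m: "is_mono d b" using Emap_supp[of f d b] Agr_D[OF f] nz by blast
  then obtain x y z where b: "b = mk x y z" "x < d" "y < d" "z < d"
    by (metis mono_eq_mk is_mono_mk)
  have "x + y + z + 1 = j"
  proof (rule ccontr)
    assume "x + y + z + 1 \<noteq> j"
    then have "f (mk (x+1) y z) = 0" "f (mk x (y+1) z) = 0" "f (mk x y (z+1)) = 0"
      using Agr_mk[OF f] by simp_all
    then show False using nz b by (simp add: Emap_mk)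
  qed
  then show ?thesis using m b by simp
qed

lemma Emap_Agr: assumes f: "f \<in> Agr d j" shows "Emap d f \<in> Agr d (j - 1)"
  unfolding Agr_def
proof (safe)
  fix b assume "Emap d f b \<noteq> 0"
  from Emap_Agr_D[OF f this] show "is_mono d b" "b 0 + b 1 + b 2 = j - 1" by auto
qed

lemma Emap_Agr0: assumes "f \<in> Agr d 0" shows "Emap d f = 0"
proof
  fix b
  show "Emap d f b = 0 b" using Emap_Agr_D[OF assms, of b] by auto
qed

lemma Lmap_Agr:
  assumes f: "f \<in> Agr d j" shows "Lmap d f \<in> Agr d (j + 1)"
  unfolding Agr_def
proof (safe)
  fix b assume nz: "Lmap d f b \<noteq> 0"
  have m: "is_mono d b" using nz Lmap_supp by blast
  then obtain x y z where b: "b = mk x y z" "x < d" "y < d" "z < d"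
    by (metis mono_eq_mk is_mono_mk)
  have "x + y + z = j + 1"
  proof (rule ccontr)
    assume a: "x + y + z \<noteq> j + 1"
    have "(if 0 < x then f (mk (x-1) y z) else 0) = 0" using a Agr_mk[OF f] by simp
    moreover have "(if 0 < y then f (mk x (y-1) z) else 0) = 0" using a Agr_mk[OF f] by simp
    moreover have "(if 0 < z then f (mk x y (z-1)) else 0) = 0" using a Agr_mk[OF f] by simp
    ultimately show False using nz b by (simp add: Lmap_mk)
  qed
  then show "is_mono d b" "b 0 + b 1 + b 2 = j + 1" using m b by simp_all
qed

lemma upd_comp: "inj \<sigma> \<Longrightarrow> (b \<circ> \<sigma>)(k := v) = (b(\<sigma> k := v)) \<circ> \<sigma>"
  by (auto simp: fun_eq_iff inj_eq)

lemma perm3_fix: "\<sigma> permutes {..<3} \<Longrightarrow> (i::nat) \<ge> 3 \<Longrightarrow> \<sigma> i = i"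
  by (simp add: permutes_def)

lemma is_mono_comp: assumes "\<sigma> permutes {..<3}" shows "is_mono d (b \<circ> \<sigma>) \<longleftrightarrow> is_mono d b"
proof -
  have 1: "(\<forall>i\<ge>3. (b \<circ> \<sigma>) i = 0) \<longleftrightarrow> (\<forall>i\<ge>3. b i = 0)"
    using perm3_fix[OF assms] by simp
  have 2: "(\<forall>i<3. (b \<circ> \<sigma>) i < d) \<longleftrightarrow> (\<forall>i<3. b i < d)"
  proof -
    have "\<sigma> ` {..<3} = {..<3}" using permutes_image[OF assms] .
    then show ?thesis by (metis (no_types, lifting) comp_apply imageE image_eqI lessThan_iff)
  qed
  show ?thesis unfolding is_mono_def using 1 2 by simp
qed

lemma Emap_act: assumes s: "\<sigma> permutes {..<3}"
  shows "Emap d (actA \<sigma> f) = actA \<sigma> (Emap d f)"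
proof
  fix b
  have inj: "inj \<sigma>" using permutes_inj[OF s] .
  have "actA \<sigma> (Emap d f) b = (\<Sum>k<3. cE d (b (\<sigma> k)) * f ((b \<circ> \<sigma>)(k := b (\<sigma> k) + 1)))"
    by (simp add: actA_def Emap_eq)
  also have "\<dots> = (\<Sum>k<3. cE d (b (\<sigma> k)) * f ((b(\<sigma> k := b (\<sigma> k) + 1)) \<circ> \<sigma>))"
    by (simp only: upd_comp[OF inj])
  also have "\<dots> = (\<Sum>k<3. cE d (b k) * f ((b(k := b k + 1)) \<circ> \<sigma>))"
    using sum.permute[OF s, of "\<lambda>k. cE d (b k) * f ((b(k := b k + 1)) \<circ> \<sigma>)"] by (simp add: comp_def)
  also have "\<dots> = Emap d (actA \<sigma> f) b" by (simp add: actA_def Emap_eq)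
  finally show "Emap d (actA \<sigma> f) b = actA \<sigma> (Emap d f) b" by simp
qed

lemma Lmap_act: assumes s: "\<sigma> permutes {..<3}"
  shows "Lmap d (actA \<sigma> f) = actA \<sigma> (Lmap d f)"
proof
  fix b
  have inj: "inj \<sigma>" using permutes_inj[OF s] .
  show "Lmap d (actA \<sigma> f) b = actA \<sigma> (Lmap d f) b"
  proof (cases "is_mono d b")
    case False then show ?thesis using is_mono_comp[OF s] by (simp add: Lmap_def actA_def)
  next
    case True
    have "actA \<sigma> (Lmap d f) b = (\<Sum>k<3. if 0 < (b \<circ> \<sigma>) k then f ((b \<circ> \<sigma>)(k := (b \<circ> \<sigma>) k - 1)) else 0)"
      using True is_mono_comp[OF s] unfolding actA_def Lmap_def by simp
    also have "\<dots> = (\<Sum>k<3. if 0 < b (\<sigma> k) then f ((b(\<sigma> k := b (\<sigma> k) - 1)) \<circ> \<sigma>) else 0)"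
      by (simp only: upd_comp[OF inj] comp_apply)
    also have "\<dots> = (\<Sum>k<3. if 0 < b k then f ((b(k := b k - 1)) \<circ> \<sigma>) else 0)"
      using sum.permute[OF s, of "\<lambda>k. if 0 < b k then f ((b(k := b k - 1)) \<circ> \<sigma>) else 0"] by (simp add: comp_def)
    also have "\<dots> = Lmap d (actA \<sigma> f) b" using True by (simp add: actA_def Lmap_def)
    finally show ?thesis by simp
  qed
qed

definition tau :: "nat \<Rightarrow> nat" where "tau = Transposition.transpose 0 1"
definition cy :: "nat \<Rightarrow> nat" where "cy = Transposition.transpose 0 1 \<circ> Transposition.transpose 1 2"

lemma tau_perm: "tau permutes {..<3}" unfolding tau_def by (rule permutes_swap_id) auto
lemma cy_perm: "cy permutes {..<3}" unfolding cy_def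
  by (rule permutes_compose; rule permutes_swap_id) auto

lemma mk_tau[simp]: "mk a b c \<circ> tau = mk b a c"
  by (auto simp: fun_eq_iff tau_def mk_def Transposition.transpose_def)
lemma mk_cy[simp]: "mk a b c \<circ> cy = mk b c a"
  by (auto simp: fun_eq_iff cy_def mk_def Transposition.transpose_def)

lemma pat_zero:
  fixes F :: "nat \<Rightarrow> nat \<Rightarrow> nat \<Rightarrow> 'k::field_char_0"
  assumes A: "\<And>a b c. F b a c = - F a b c"
    and C: "\<And>a b c. F a b c + F b c a + F c a b = 0"
    and Z1: "\<And>a b c. c < b \<Longrightarrow> b < a \<Longrightarrow> F a b c = 0"
    and Z2: "\<And>a b c. b < a \<Longrightarrow> a < c \<Longrightarrow> F a b c = 0"
    and Z3: "\<And>a b. a \<noteq> b \<Longrightarrow> F a b a = 0"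
  shows "F x y z = 0"
proof -
  have aa: "F a a c = 0" for a c
  proof -
    have "F a a c + F a a c = 0" using A[of a a c] by (metis add.right_inverse)
    then have "2 * F a a c = 0" by (simp only: mult_2)
    then show ?thesis by simp
  qed
  have aa2: "F a b b = 0" for a b
  proof (cases "a = b")
    case True then show ?thesis using aa by simp
  next
    case False
    then show ?thesis using C[of a b b] Z3[of b a] aa[of b a] by simp
  qed
  have strict: "F x y z = 0" if ne: "x \<noteq> y" "y \<noteq> z" "x \<noteq> z"
  proof -
    have c3: "F r p q = 0" if "r < q" "q < p" for p q r
    proof -
      have "F p q r = 0" using Z1 that by blast
      moreover have "F q r p = 0" using Z2 that by blast
      ultimately show ?thesis using C[of p q r] by simp
    qed
    consider "z < y \<and> y < x" | "y < x \<and> x < z" | "x < z \<and> z < y" | "x < y \<and> z < x"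
      | "z < y \<and> y < x" | "y < z \<and> z < x" | "x < y \<and> y < z"
      using ne by linarith
    then show ?thesis
    proof cases
      case 1 then show ?thesis using Z1 by blast
    next
      case 2 then show ?thesis using Z2 by blast
    next
      case 3 then show ?thesis using c3 by blast
    next
      case 4 then have "F y x z = 0" using Z1 by blast
      then show ?thesis using A[of y x z] by simp
    next
      case 5 then show ?thesis using Z1 by blast
    next
      case 6 then have "F y x z = 0" using c3 by blast
      then show ?thesis using A[of y x z] by simp
    next
      case 7 then have "F y x z = 0" using Z2 by blast
      then show ?thesis using A[of y x z] by simp
    qed
  qed
  show ?thesis
  proof (cases "x = y")
    case True then show ?thesis using aa by simp
  next
    case False
    show ?thesis
    proof (cases "x = z")
      case True then show ?thesis using Z3 False by simp
    next
      case False2: False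
      show ?thesis
      proof (cases "y = z")
        case True then show ?thesis using aa2 by simp
      next
        case False then show ?thesis using strict \<open>x \<noteq> y\<close> False2 by simp
      qed
    qed
  qed
qed


definition Fx :: "(nat \<Rightarrow> nat \<Rightarrow> nat \<Rightarrow> 'k::ab_group_add) \<Rightarrow> nat \<Rightarrow> nat \<Rightarrow> nat \<Rightarrow> 'k" where
 "Fx g x y z = (if z < y \<and> y < x then g x y z
  else if y < x \<and> x < z then g x y z
  else if x < z \<and> z < y then - g y z x - g z x y
  else if z < x \<and> x < y then - g y x z
  else if y < z \<and> z < x then g x z y + g z y x
  else if x < y \<and> y < z then - g y x z
  else if x = z \<and> x \<noteq> y then g x y z
  else if y = z \<and> x \<noteq> y then - g y x y
  else 0)"

lemma ord3_cases:
  fixes a b c :: nat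
  obtains "c < b \<and> b < a" | "b < a \<and> a < c" | "a < c \<and> c < b" | "c < a \<and> a < b"
    | "b < c \<and> c < a" | "a < b \<and> b < c" | "a = c \<and> a \<noteq> b" | "b = c \<and> a \<noteq> b"
    | "a = b \<and> a \<noteq> c" | "a = b \<and> b = c"
  by linarith

lemma Fx_A: "Fx g b a c = - Fx g a b c"
  by (cases rule: ord3_cases[of a b c]) (auto simp: Fx_def)

lemma Fx_C: "Fx g a b c + Fx g b c a + Fx g c a b = 0"
  by (cases rule: ord3_cases[of a b c]) (auto simp: Fx_def)

lemma Fx_T: "(c < b \<and> b < a) \<or> (b < a \<and> a < c) \<or> (a = c \<and> a \<noteq> b) \<Longrightarrow> Fx g a b c = g a b c"
  by (auto simp: Fx_def)


lemma tau_simps[simp]: "tau 0 = 1" "tau (Suc 0) = 0" "tau 2 = 2"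
  by (auto simp: tau_def Transposition.transpose_def)
lemma cy_simps[simp]: "cy 0 = 1" "cy (Suc 0) = 2" "cy 2 = 0"
  by (auto simp: cy_def Transposition.transpose_def)

definition scF :: "'k::field \<Rightarrow> ((nat \<Rightarrow> nat) \<Rightarrow> 'k) \<Rightarrow> ((nat \<Rightarrow> nat) \<Rightarrow> 'k)" where
  "scF c f = (\<lambda>e. c * f e)"

interpretation vF: vector_space "scF :: 'k::field \<Rightarrow> _"
  by unfold_locales (simp_all add: scF_def fun_eq_iff algebra_simps)

definition Y :: "nat \<Rightarrow> nat \<Rightarrow> ((nat \<Rightarrow> nat) \<Rightarrow> 'k::field) set" where
  "Y d j = {f \<in> Agr d j. actA tau f = - f \<and> f + actA cy f + actA cy (actA cy f) = 0}"

lemma actA_add: "actA s (f + g) = actA s f + actA s g" by (simp add: actA_def fun_eq_iff)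
lemma actA_scale: "actA s (scF c f) = scF c (actA s f)" by (simp add: actA_def scF_def fun_eq_iff)
lemma actA_zero: "actA s 0 = 0" by (simp add: actA_def fun_eq_iff)
lemma actA_uminus: "actA s (- f) = - actA s f" by (simp add: actA_def fun_eq_iff)

lemma Agr_add: "f \<in> Agr d j \<Longrightarrow> g \<in> Agr d j \<Longrightarrow> f + g \<in> Agr d j"
  by (auto simp: Agr_def) (metis add.right_neutral)+
lemma Agr_scale: "f \<in> Agr d j \<Longrightarrow> scF c f \<in> Agr d j"
  by (auto simp: Agr_def scF_def)
lemma Agr_zero: "0 \<in> Agr d j"
  by (auto simp: Agr_def)

lemma Y_subspace: "vF.subspace (Y d j :: ((nat \<Rightarrow> nat) \<Rightarrow> 'k::field) set)"
  unfolding vF.subspace_def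
proof (intro conjI ballI allI)
  show "0 \<in> Y d j" by (simp add: Y_def Agr_zero actA_zero)
next
  fix f g :: "(nat \<Rightarrow> nat) \<Rightarrow> 'k" assume f: "f \<in> Y d j" and g: "g \<in> Y d j"
  then have "f + g \<in> Agr d j" by (simp add: Y_def Agr_add)
  moreover have "actA tau (f + g) = - (f + g)" using f g by (simp add: Y_def actA_add)
  moreover have "(f + g) + actA cy (f + g) + actA cy (actA cy (f + g)) =
     (f + actA cy f + actA cy (actA cy f)) + (g + actA cy g + actA cy (actA cy g))"
    by (simp add: actA_add algebra_simps)
  moreover have "f + actA cy f + actA cy (actA cy f) = 0" "g + actA cy g + actA cy (actA cy g) = 0"
    using f g by (simp_all add: Y_def)
  ultimately show "f + g \<in> Y d j" unfolding Y_def by simp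
next
  fix c and f :: "(nat \<Rightarrow> nat) \<Rightarrow> 'k" assume f: "f \<in> Y d j"
  then have "scF c f \<in> Agr d j" by (simp add: Y_def Agr_scale)
  moreover have "actA tau (scF c f) = - (scF c f)" using f unfolding Y_def actA_scale
    by (simp add: scF_def fun_eq_iff)
  moreover have "scF c f + actA cy (scF c f) + actA cy (actA cy (scF c f)) =
     scF c (f + actA cy f + actA cy (actA cy f))"
    by (simp add: actA_def scF_def fun_eq_iff algebra_simps)
  moreover have "f + actA cy f + actA cy (actA cy f) = 0" using f by (simp add: Y_def)
  then have "scF c (f + actA cy f + actA cy (actA cy f)) = 0" by (simp add: scF_def fun_eq_iff)
  ultimately show "scF c f \<in> Y d j" unfolding Y_def by simp
qed

definition Tset :: "nat \<Rightarrow> int \<Rightarrow> (nat \<times> nat \<times> nat) set" where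
  "Tset d n = {(a,b,c). a < d \<and> b < d \<and> c < d \<and> int (a+b+c) = n \<and>
     ((c < b \<and> b < a) \<or> (b < a \<and> a < c) \<or> (a = c \<and> a \<noteq> b))}"

lemma Tset_finite: "finite (Tset d n)"
proof -
  have "Tset d n \<subseteq> {..<d} \<times> {..<d} \<times> {..<d}" by (auto simp: Tset_def)
  then show ?thesis by (rule finite_subset) auto
qed

definition extY :: "nat \<Rightarrow> nat \<Rightarrow> (nat \<Rightarrow> nat \<Rightarrow> nat \<Rightarrow> 'k::field) \<Rightarrow> ((nat \<Rightarrow> nat) \<Rightarrow> 'k)" where
  "extY d j g = (\<lambda>e. if is_mono d e \<and> e 0 + e 1 + e 2 = j then Fx g (e 0) (e 1) (e 2) else 0)"

lemma extY_Y: "extY d j g \<in> Y d j"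
proof -
  have mt: "is_mono d (e \<circ> tau) \<longleftrightarrow> is_mono d e" for e using is_mono_comp[OF tau_perm] .
  have mc: "is_mono d (e \<circ> cy) \<longleftrightarrow> is_mono d e" for e using is_mono_comp[OF cy_perm] .
  have A: "extY d j g \<in> Agr d j" by (auto simp: Agr_def extY_def split: if_splits)
  have T: "actA tau (extY d j g) = - extY d j g"
  proof
    fix e
    show "actA tau (extY d j g) e = (- extY d j g) e"
      unfolding actA_def extY_def using mt[of e] Fx_A[of g "e 0" "e 1" "e 2"]
      by (simp add: add.commute)
  qed
  have C: "extY d j g + actA cy (extY d j g) + actA cy (actA cy (extY d j g)) = 0"
  proof
    fix e
    have m2: "is_mono d (e \<circ> cy \<circ> cy) \<longleftrightarrow> is_mono d e" using mc[of "e \<circ> cy"] mc[of e] by simp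
    have s1: "(e \<circ> cy) 0 + (e \<circ> cy) 1 + (e \<circ> cy) 2 = e 0 + e 1 + e 2" by simp
    have s2: "(e \<circ> cy \<circ> cy) 0 + (e \<circ> cy \<circ> cy) 1 + (e \<circ> cy \<circ> cy) 2 = e 0 + e 1 + e 2" by simp
    show "(extY d j g + actA cy (extY d j g) + actA cy (actA cy (extY d j g))) e = 0 e"
      unfolding actA_def extY_def using mc[of e] m2 Fx_C[of g "e 0" "e 1" "e 2"]
      by (simp add: add.commute add.left_commute comp_def)
  qed
  show ?thesis using A T C by (simp add: Y_def)
qed

lemma extY_T: assumes "(a,b,c) \<in> Tset d (int j)" shows "extY d j g (mk a b c) = g a b c"
  using assms by (auto simp: Tset_def extY_def intro!: Fx_T)

lemma Y_mk:
  assumes h: "h \<in> Y d j"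
  shows "h (mk b a c) = - h (mk a b c)" "h (mk a b c) + h (mk b c a) + h (mk c a b) = 0"
proof -
  have "actA tau h = - h" using h by (simp add: Y_def)
  then have "actA tau h (mk a b c) = - h (mk a b c)" by simp
  then show "h (mk b a c) = - h (mk a b c)" by (simp add: actA_def)
  have "(h + actA cy h + actA cy (actA cy h)) (mk a b c) = 0" using h by (simp add: Y_def)
  moreover have "mk a b c \<circ> (cy \<circ> cy) = mk c a b" by (simp add: o_assoc)
  ultimately show "h (mk a b c) + h (mk b c a) + h (mk c a b) = 0" by (simp add: actA_def)
qed

lemma Y_unique:
  fixes h :: "(nat \<Rightarrow> nat) \<Rightarrow> 'k::field_char_0"
  assumes h: "h \<in> Y d j" and z: "\<And>a b c. (a,b,c) \<in> Tset d (int j) \<Longrightarrow> h (mk a b c) = 0"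
  shows "h = 0"
proof -
  have hA: "h \<in> Agr d j" using h by (simp add: Y_def)
  have zT: "h (mk a b c) = 0" if "(c < b \<and> b < a) \<or> (b < a \<and> a < c) \<or> (a = c \<and> a \<noteq> b)" for a b c
  proof (cases "a < d \<and> b < d \<and> c < d \<and> a + b + c = j")
    case True then show ?thesis using z that by (auto simp: Tset_def)
  next
    case False
    then have "\<not> (is_mono d (mk a b c) \<and> (mk a b c) 0 + (mk a b c) 1 + (mk a b c) 2 = j)" by simp
    then show ?thesis using Agr_D[OF hA] by blast
  qed
  have all: "h (mk x y z) = 0" for x y z
    by (rule pat_zero[where F = "\<lambda>a b c. h (mk a b c)"], rule Y_mk(1)[OF h], rule Y_mk(2)[OF h])
       (use zT in auto)
  show ?thesis
  proof
    fix e
    show "h e = 0 e"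
    proof (cases "is_mono d e")
      case True then show ?thesis using all mono_eq_mk[OF True] by (metis zero_fun_apply)
    next
      case False then show ?thesis using Agr_D[OF hA] by auto
    qed
  qed
qed


lemma sum_fun_app: "(\<Sum>a\<in>A. g a) x = (\<Sum>a\<in>A. g a x)"
  by (induct A rule: infinite_finite_induct) auto

definition mkt :: "nat \<times> nat \<times> nat \<Rightarrow> nat \<Rightarrow> nat" where
  "mkt t = (case t of (a,b,c) \<Rightarrow> mk a b c)"

definition bv :: "nat \<Rightarrow> nat \<Rightarrow> nat \<times> nat \<times> nat \<Rightarrow> ((nat \<Rightarrow> nat) \<Rightarrow> 'k::field)" where
  "bv d j t = extY d j (\<lambda>x y z. if (x,y,z) = t then 1 else 0)"

lemma bv_eval: "t' \<in> Tset d (int j) \<Longrightarrow> bv d j t (mkt t') = (if t' = t then 1 else 0)"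
  by (cases t') (auto simp: bv_def mkt_def extY_T)

lemma bv_inj: "inj_on (bv d j :: _ \<Rightarrow> ((nat \<Rightarrow> nat) \<Rightarrow> 'k::field)) (Tset d (int j))"
proof (rule inj_onI)
  fix t t' assume t: "t \<in> Tset d (int j)" and t': "t' \<in> Tset d (int j)"
    and e: "(bv d j t :: (nat \<Rightarrow> nat) \<Rightarrow> 'k) = bv d j t'"
  have "(bv d j t :: (nat \<Rightarrow> nat) \<Rightarrow> 'k) (mkt t) = 1" by (simp add: bv_eval[OF t])
  then have "(bv d j t' :: (nat \<Rightarrow> nat) \<Rightarrow> 'k) (mkt t) = 1" using e by simp
  moreover have "(bv d j t' :: (nat \<Rightarrow> nat) \<Rightarrow> 'k) (mkt t) = (if t = t' then 1 else 0)" by (rule bv_eval[OF t])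
  ultimately show "t = t'" by (simp split: if_splits)
qed

lemma sum_bv_eval:
  assumes t: "t \<in> Tset d (int j)"
  shows "(\<Sum>t'\<in>Tset d (int j). u t' * (bv d j t' :: (nat \<Rightarrow> nat) \<Rightarrow> 'k::field) (mkt t)) = u t"
proof -
  have "(\<Sum>t'\<in>Tset d (int j). u t' * (bv d j t' :: (nat \<Rightarrow> nat) \<Rightarrow> 'k) (mkt t))
      = (\<Sum>t'\<in>Tset d (int j). if t' = t then u t' else 0)"
    by (rule sum.cong) (auto simp: bv_eval[OF t])
  also have "\<dots> = u t" using t Tset_finite by simp
  finally show ?thesis .
qed

lemma dim_Y:
  "vF.dim (Y d j :: ((nat \<Rightarrow> nat) \<Rightarrow> 'k::field_char_0) set) = card (Tset d (int j))"
    and Y_span: "\<exists>A. finite A \<and> (Y d j :: ((nat \<Rightarrow> nat) \<Rightarrow> 'k::field_char_0) set) \<subseteq> vF.span A"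
proof -
  define T where "T = Tset d (int j)"
  define B :: "((nat \<Rightarrow> nat) \<Rightarrow> 'k) set" where "B = bv d j ` T"
  have fT: "finite T" using Tset_finite T_def by simp
  have fB: "finite B" using fT B_def by simp
  have inj: "inj_on (bv d j :: _ \<Rightarrow> ((nat \<Rightarrow> nat) \<Rightarrow> 'k)) T" using bv_inj T_def by simp
  have BY: "B \<subseteq> Y d j" using extY_Y by (auto simp: B_def bv_def)
  have ind: "vF.independent B"
  proof (rule vF.independent_if_scalars_zero[OF fB])
    fix u and x :: "(nat \<Rightarrow> nat) \<Rightarrow> 'k"
    assume s: "(\<Sum>x\<in>B. scF (u x) x) = 0" and x: "x \<in> B"
    then obtain t where t: "t \<in> T" "x = bv d j t" by (auto simp: B_def)
    have "0 = (\<Sum>x\<in>B. scF (u x) x) (mkt t)" using s by simp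
    also have "\<dots> = (\<Sum>x\<in>B. u x * x (mkt t))" by (simp add: sum_fun_app scF_def)
    also have "\<dots> = (\<Sum>t'\<in>T. u (bv d j t') * (bv d j t' :: (nat \<Rightarrow> nat) \<Rightarrow> 'k) (mkt t))"
      unfolding B_def by (rule sum.reindex[OF inj, unfolded comp_def])
    also have "\<dots> = u (bv d j t)" using sum_bv_eval[of t d j "\<lambda>t'. u (bv d j t')"] t T_def by simp
    finally show "u x = 0" using t by simp
  qed
  have sp: "Y d j \<subseteq> vF.span B"
  proof
    fix f :: "(nat \<Rightarrow> nat) \<Rightarrow> 'k" assume f: "f \<in> Y d j"
    define g where "g = (\<Sum>t\<in>T. scF (f (mkt t)) (bv d j t :: (nat \<Rightarrow> nat) \<Rightarrow> 'k))"
    have gY: "g \<in> Y d j" unfolding g_def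
      apply (rule vF.subspace_sum[OF Y_subspace])
      apply (rule vF.subspace_scale[OF Y_subspace])
      using BY B_def by auto
    have gsp: "g \<in> vF.span B" unfolding g_def
      apply (rule vF.span_sum)
      apply (rule vF.span_scale)
      apply (rule vF.span_base)
      by (auto simp: B_def)
    have "f - g \<in> Y d j" using vF.subspace_diff[OF Y_subspace f gY] .
    moreover have "(f - g) (mk a b c) = 0" if "(a,b,c) \<in> Tset d (int j)" for a b c
    proof -
      have "g (mkt (a,b,c)) = f (mkt (a,b,c))"
        unfolding g_def sum_fun_app using sum_bv_eval[OF that, of "\<lambda>t. f (mkt t)"] T_def
        by (simp add: scF_def)
      then show ?thesis by (simp add: mkt_def)
    qed
    ultimately have "f - g = 0" by (rule Y_unique)
    then show "f \<in> vF.span B" using gsp by simp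
  qed
  have "card B = card T" using card_image[OF inj] B_def by simp
  then show "vF.dim (Y d j :: ((nat \<Rightarrow> nat) \<Rightarrow> 'k) set) = card (Tset d (int j))"
    using vF.dim_unique[OF BY sp ind] T_def by simp
  show "\<exists>A. finite A \<and> (Y d j :: ((nat \<Rightarrow> nat) \<Rightarrow> 'k) set) \<subseteq> vF.span A" using fB sp by blast
qed

lemma Lmap_zero: "Lmap d 0 = 0" by (simp add: Lmap_def fun_eq_iff zero_fun_def)
lemma Emap_zero: "Emap d 0 = 0" by (simp add: Emap_def fun_eq_iff zero_fun_def)

lemma Emap_scF: "Emap d (scF c f) = scF c (Emap d f)"
  using Emap_scale[of d c f] by (simp add: scF_def)
lemma Lmap_scF: "Lmap d (scF c f) = scF c (Lmap d f)"
  using Lmap_scale[of d c f] by (simp add: scF_def)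

lemma minus_scF: "- f = scF (-1) f" by (simp add: scF_def fun_eq_iff)
lemma diff_scF: "f - g = f + scF (-1) g" by (simp add: scF_def fun_eq_iff)

lemma Emap_uminus: "Emap d (- f) = - Emap d f"
  unfolding minus_scF[of f] minus_scF[of "Emap d f"] by (rule Emap_scF)
lemma Emap_diff: "Emap d (f - g) = Emap d f - Emap d g"
  unfolding diff_scF[of f g] diff_scF[of "Emap d f"] Emap_add Emap_scF ..
lemma Lmap_uminus: "Lmap d (- f) = - Lmap d f"
  unfolding minus_scF[of f] minus_scF[of "Lmap d f"] by (rule Lmap_scF)
lemma Lmap_diff: "Lmap d (f - g) = Lmap d f - Lmap d g"
  unfolding diff_scF[of f g] diff_scF[of "Lmap d f"] Lmap_add Lmap_scF ..

lemma Agr_diff: assumes "f \<in> Agr d j" "g \<in> Agr d j" shows "f - g \<in> Agr d j"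
  unfolding diff_scF[of f g] by (intro Agr_add Agr_scale assms)

lemma EL_inj:
  fixes f :: "(nat \<Rightarrow> nat) \<Rightarrow> 'k::field_char_0"
  assumes "2 * m < 3 * (d - 1)" "f \<in> Agr d m"
    "\<And>b. Emap d (Lmap d f) b + of_nat t * f b = 0"
  shows "f = 0"
  using assms
proof (induction m arbitrary: f t)
  case (0 f t)
  define \<mu> where "\<mu> = 3 * (int d - 1) - 2 * int 0"
  have mu: "\<mu> > 0" using "0.prems"(1) \<mu>_def by simp
  have E0: "Emap d f = 0" using Emap_Agr0[OF "0.prems"(2)] .
  have "Emap d (Lmap d f) b = Lmap d (Emap d f) b + of_int \<mu> * f b" for b
    using EL_comm[OF "0.prems"(2)] \<mu>_def by (simp add: fun_eq_iff)
  moreover have L0: "Lmap d (Emap d f) b = 0" for b using E0 Lmap_zero[of d] by (metis zero_fun_apply)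
  ultimately have "(of_int \<mu> + of_nat t) * f b = 0" for b
    using "0.prems"(3)[of b] by (simp add: algebra_simps)
  moreover have "(of_int \<mu> + of_nat t :: 'k) \<noteq> 0"
  proof -
    have "(of_int \<mu> + of_nat t :: 'k) = of_int (\<mu> + int t)" by simp
    moreover have "\<mu> + int t \<noteq> 0" using mu by simp
    ultimately show ?thesis by (metis of_int_eq_0_iff)
  qed
  ultimately show ?case by (simp add: fun_eq_iff)
next
  case (Suc m f t)
  define \<mu> where "\<mu> = 3 * (int d - 1) - 2 * int (Suc m)"
  have mu: "\<mu> > 0" using Suc.prems(1) \<mu>_def by simp
  have EL: "Emap d (Lmap d f) b = Lmap d (Emap d f) b + of_int \<mu> * f b" for b
    using EL_comm[OF Suc.prems(2)] \<mu>_def by (simp add: fun_eq_iff)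
  define c :: 'k where "c = of_int \<mu> + of_nat t"
  have cn: "c = of_nat (nat \<mu> + t)" using mu c_def by simp
  have c0: "c \<noteq> 0"
  proof -
    have "nat \<mu> + t \<noteq> 0" using mu by simp
    then have "(of_nat (nat \<mu> + t) :: 'k) \<noteq> 0" by (metis of_nat_eq_0_iff)
    then show ?thesis using cn by simp
  qed
  have star: "Lmap d (Emap d f) + scF c f = 0"
    using Suc.prems(3) EL by (simp add: fun_eq_iff scF_def c_def algebra_simps)
  have "Emap d (Lmap d (Emap d f) + scF c f) = 0" using star Emap_zero by simp
  then have "Emap d (Lmap d (Emap d f)) + scF c (Emap d f) = 0" by (simp add: Emap_add Emap_scF)
  then have h: "\<And>b. Emap d (Lmap d (Emap d f)) b + of_nat (nat \<mu> + t) * Emap d f b = 0"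
    using cn by (simp add: fun_eq_iff scF_def)
  have EA: "Emap d f \<in> Agr d m" using Emap_Agr[OF Suc.prems(2)] by simp
  have "Emap d f = 0" using Suc.IH[OF _ EA h] Suc.prems(1) by (simp add: zero_fun_def)
  then have "Lmap d (Emap d f) = 0" using Lmap_zero by metis
  then have "scF c f = 0" using star by simp
  then show ?case using c0 by (simp add: scF_def fun_eq_iff)
qed


lemma vs_scF: "vector_space (scF :: 'k::field \<Rightarrow> _)"
  by unfold_locales (simp_all add: scF_def fun_eq_iff algebra_simps)

interpretation vFF: vector_space_pair "scF :: 'k::field \<Rightarrow> _" "scF :: 'k::field \<Rightarrow> _"
  by unfold_locales

lemma lin_Emap: "Vector_Spaces.linear scF scF (Emap d :: _ \<Rightarrow> ((nat \<Rightarrow> nat) \<Rightarrow> 'k::field))"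
  unfolding Vector_Spaces.linear_iff using vs_scF Emap_add Emap_scF by blast

lemma lin_EL: "Vector_Spaces.linear scF scF (\<lambda>f. Emap d (Lmap d f) :: ((nat \<Rightarrow> nat) \<Rightarrow> 'k::field))"
  unfolding Vector_Spaces.linear_iff using vs_scF by (simp add: Emap_add Emap_scF Lmap_add Lmap_scF)

lemma Y_D: "f \<in> Y d j \<Longrightarrow> f \<in> Agr d j \<and> actA tau f = - f \<and> f + actA cy f + actA cy (actA cy f) = 0"
  by (simp add: Y_def)

lemma Emap_Y: assumes f: "f \<in> Y d j" shows "Emap d f \<in> Y d (j - 1)"
proof -
  note D = Y_D[OF f]
  have 1: "Emap d f \<in> Agr d (j - 1)" using Emap_Agr D by blast
  have 2: "actA tau (Emap d f) = - Emap d f"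
    using Emap_act[OF tau_perm, of d f] D by (simp add: Emap_uminus)
  have "Emap d f + actA cy (Emap d f) + actA cy (actA cy (Emap d f)) =
      Emap d (f + actA cy f + actA cy (actA cy f))"
    by (simp add: Emap_add Emap_act[OF cy_perm])
  then have 3: "Emap d f + actA cy (Emap d f) + actA cy (actA cy (Emap d f)) = 0"
    using D Emap_zero by simp
  show ?thesis using 1 2 3 by (simp add: Y_def)
qed

lemma Lmap_Y: assumes f: "f \<in> Y d j" shows "Lmap d f \<in> Y d (j + 1)"
proof -
  note D = Y_D[OF f]
  have 1: "Lmap d f \<in> Agr d (j + 1)" using Lmap_Agr D by blast
  have 2: "actA tau (Lmap d f) = - Lmap d f"
    using Lmap_act[OF tau_perm, of d f] D by (simp add: Lmap_uminus)
  have "Lmap d f + actA cy (Lmap d f) + actA cy (actA cy (Lmap d f)) =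
      Lmap d (f + actA cy f + actA cy (actA cy f))"
    by (simp add: Lmap_add Lmap_act[OF cy_perm])
  then have 3: "Lmap d f + actA cy (Lmap d f) + actA cy (actA cy (Lmap d f)) = 0"
    using D Lmap_zero by metis
  show ?thesis using 1 2 3 by (simp add: Y_def)
qed

lemma E_onto:
  assumes j: "1 \<le> j" "2 * j \<le> 3 * (d - 1)"
  shows "Emap d ` Y d j = (Y d (j - 1) :: ((nat \<Rightarrow> nat) \<Rightarrow> 'k::field_char_0) set)"
proof
  show "Emap d ` Y d j \<subseteq> (Y d (j - 1) :: ((nat \<Rightarrow> nat) \<Rightarrow> 'k) set)" using Emap_Y by blast
next
  define S :: "((nat \<Rightarrow> nat) \<Rightarrow> 'k) set" where "S = Y d (j - 1)"
  define g :: "((nat \<Rightarrow> nat) \<Rightarrow> 'k) \<Rightarrow> _" where "g = (\<lambda>f. Emap d (Lmap d f))"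
  have jj: "j - 1 + 1 = j" using j by simp
  have sub: "g ` S \<subseteq> S"
  proof
    fix u assume "u \<in> g ` S"
    then obtain f where f: "f \<in> S" "u = g f" by auto
    have "Lmap d f \<in> Y d j" using Lmap_Y[of f d "j - 1"] f jj S_def by simp
    then show "u \<in> S" using Emap_Y f S_def g_def by blast
  qed
  have inj: "inj_on g S"
  proof (rule inj_onI)
    fix f1 f2 assume f1: "f1 \<in> S" and f2: "f2 \<in> S" and e: "g f1 = g f2"
    have hA: "f1 - f2 \<in> Agr d (j - 1)" using f1 f2 S_def Y_D Agr_diff by blast
    have "Emap d (Lmap d (f1 - f2)) = 0" using e by (simp add: g_def Lmap_diff Emap_diff)
    then have "\<And>b. Emap d (Lmap d (f1 - f2)) b + of_nat 0 * (f1 - f2) b = 0" by simp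
    moreover have "2 * (j - 1) < 3 * (d - 1)" using j by simp
    ultimately have "f1 - f2 = 0" using EL_inj hA by blast
    then show "f1 = f2" by simp
  qed
  obtain A where A: "finite A" "S \<subseteq> vF.span A" using Y_span S_def by blast
  have lin: "Vector_Spaces.linear scF scF g" unfolding g_def by (rule lin_EL)
  have sS: "vF.subspace S" unfolding S_def by (rule Y_subspace)
  have onto: "g ` S = S" using vF.inj_endo_onto[OF lin sS A inj sub] .
  show "(Y d (j - 1) :: ((nat \<Rightarrow> nat) \<Rightarrow> 'k) set) \<subseteq> Emap d ` Y d j"
  proof
    fix u assume "u \<in> (Y d (j - 1) :: ((nat \<Rightarrow> nat) \<Rightarrow> 'k) set)"
    then obtain f where f: "f \<in> S" "u = g f" using onto S_def by blast
    have "Lmap d f \<in> Y d j" using Lmap_Y[of f d "j - 1"] f jj S_def by simp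
    then show "u \<in> Emap d ` Y d j" using f g_def by blast
  qed
qed

lemma dim_ker:
  assumes j: "2 * j \<le> 3 * (d - 1)"
  shows "int (vF.dim {f \<in> (Y d j :: ((nat \<Rightarrow> nat) \<Rightarrow> 'k::field_char_0) set). Emap d f = 0})
     = int (card (Tset d (int j))) - int (card (Tset d (int j - 1)))"
proof (cases "j = 0")
  case True
  have "{f \<in> (Y d j :: ((nat \<Rightarrow> nat) \<Rightarrow> 'k) set). Emap d f = 0} = Y d j"
    using True Emap_Agr0 Y_D by blast
  moreover have "Tset d (int j - 1) = {}" using True by (auto simp: Tset_def)
  ultimately show ?thesis using dim_Y by simp
next
  case False
  obtain A where A: "finite A" "(Y d j :: ((nat \<Rightarrow> nat) \<Rightarrow> 'k) set) \<subseteq> vF.span A" using Y_span by blast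
  have rn: "vF.dim (Y d j :: ((nat \<Rightarrow> nat) \<Rightarrow> 'k) set) =
      vF.dim {f \<in> (Y d j :: ((nat \<Rightarrow> nat) \<Rightarrow> 'k) set). Emap d f = 0} + vF.dim (Y d (j - 1) :: ((nat \<Rightarrow> nat) \<Rightarrow> 'k) set)"
    using vFF.rank_nullity_onto[OF lin_Emap Y_subspace A E_onto] False j by simp
  have ij: "int (j - 1) = int j - 1" using False by simp
  have "card (Tset d (int j)) = vF.dim {f \<in> (Y d j :: ((nat \<Rightarrow> nat) \<Rightarrow> 'k) set). Emap d f = 0}
     + card (Tset d (int j - 1))"
  proof -
    have d1: "vF.dim (Y d j :: ((nat \<Rightarrow> nat) \<Rightarrow> 'k) set) = card (Tset d (int j))" by (rule dim_Y)
    have d2: "vF.dim (Y d (j - 1) :: ((nat \<Rightarrow> nat) \<Rightarrow> 'k) set) = card (Tset d (int (j - 1)))" by (rule dim_Y)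
    show ?thesis using rn ij d1 d2 by simp
  qed
  then show ?thesis by simp
qed

definition Sn :: "nat \<Rightarrow> int \<Rightarrow> (nat \<Rightarrow> nat \<Rightarrow> nat \<Rightarrow> bool) \<Rightarrow> (nat \<times> nat \<times> nat) set" where
  "Sn d n P = {(a,b,c). a < d \<and> b < d \<and> c < d \<and> int (a+b+c) = n \<and> P a b c}"

lemma Sn_finite: "finite (Sn d n P)"
proof -
  have "Sn d n P \<subseteq> {..<d} \<times> {..<d} \<times> {..<d}" by (auto simp: Sn_def)
  then show ?thesis by (rule finite_subset) auto
qed

lemma Sn_cong: "(\<And>a b c. P a b c \<longleftrightarrow> Q a b c) \<Longrightarrow> Sn d n P = Sn d n Q"
  by (simp add: Sn_def)

lemma card_Sn_disj:
  assumes "\<And>a b c. \<not> (P a b c \<and> Q a b c)"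
  shows "card (Sn d n (\<lambda>a b c. P a b c \<or> Q a b c)) = card (Sn d n P) + card (Sn d n Q)"
proof -
  have "Sn d n (\<lambda>a b c. P a b c \<or> Q a b c) = Sn d n P \<union> Sn d n Q" by (auto simp: Sn_def)
  moreover have "Sn d n P \<inter> Sn d n Q = {}" using assms by (auto simp: Sn_def)
  ultimately show ?thesis by (simp add: card_Un_disjoint Sn_finite)
qed

lemma card_Sn_rot: "card (Sn d n (\<lambda>a b c. P b c a)) = card (Sn d n P)"
proof -
  have "(\<lambda>(a,b,c). (b,c,a)) ` Sn d n (\<lambda>a b c. P b c a) = Sn d n P"
    by (auto simp: Sn_def image_iff add.commute add.left_commute)
  moreover have "inj_on (\<lambda>(a::nat,b::nat,c::nat). (b,c,a)) (Sn d n (\<lambda>a b c. P b c a))"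
    by (auto simp: inj_on_def)
  ultimately show ?thesis by (metis card_image)
qed

lemma card_Sn_sw23: "card (Sn d n (\<lambda>a b c. P a c b)) = card (Sn d n P)"
proof -
  have "(\<lambda>(a,b,c). (a,c,b)) ` Sn d n (\<lambda>a b c. P a c b) = Sn d n P"
    by (auto simp: Sn_def image_iff add.commute add.left_commute)
  moreover have "inj_on (\<lambda>(a::nat,b::nat,c::nat). (a,c,b)) (Sn d n (\<lambda>a b c. P a c b))"
    by (auto simp: inj_on_def)
  ultimately show ?thesis by (metis card_image)
qed

lemma card_Sn_sw12: "card (Sn d n (\<lambda>a b c. P b a c)) = card (Sn d n P)"
proof -
  have "(\<lambda>(a,b,c). (b,a,c)) ` Sn d n (\<lambda>a b c. P b a c) = Sn d n P"
    by (auto simp: Sn_def image_iff add.commute add.left_commute)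
  moreover have "inj_on (\<lambda>(a::nat,b::nat,c::nat). (b,a,c)) (Sn d n (\<lambda>a b c. P b a c))"
    by (auto simp: inj_on_def)
  ultimately show ?thesis by (metis card_image)
qed



definition "pT a b c \<longleftrightarrow> (c < b \<and> b < a) \<or> (b < a \<and> a < c) \<or> (a = c \<and> a \<noteq> (b::nat))"
definition "pD a b c \<longleftrightarrow> c < b \<and> b < (a::nat)"
definition "pE1 a b c \<longleftrightarrow> a = b \<and> c < (b::nat)"
definition "pE2 (a::nat) b c \<longleftrightarrow> b = c \<and> b < a"
definition "pF (a::nat) b c \<longleftrightarrow> a = b \<and> b = c"
definition "qR1 a b c \<longleftrightarrow> a < c \<and> c < (b::nat)"
definition "qR2 a b c \<longleftrightarrow> b < c \<and> c < (a::nat)"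
definition "qR4 a b c \<longleftrightarrow> a = b \<and> a < (c::nat)"
definition "qR a b c \<longleftrightarrow> qR1 a b c \<or> (qR2 a b c \<or> (pE1 a b c \<or> (qR4 a b c \<or> pF a b c)))"
definition "qT' a b c \<longleftrightarrow> pT b a c"
lemmas pdefs = pT_def pD_def pE1_def pE2_def pF_def qR1_def qR2_def qR4_def qR_def qT'_def

lemma card_R: "card (Sn d n qR) = 2 * card (Sn d n pD) + card (Sn d n pE1) + card (Sn d n pE2) + card (Sn d n pF)"
proof -
  have e4: "card (Sn d n (\<lambda>a b c. qR4 a b c \<or> pF a b c)) = card (Sn d n qR4) + card (Sn d n pF)"
    apply (rule card_Sn_disj) subgoal for a b c by (cases rule: ord3_cases[of a b c]) (auto simp: pdefs) done
  have e3: "card (Sn d n (\<lambda>a b c. pE1 a b c \<or> (qR4 a b c \<or> pF a b c))) = card (Sn d n pE1) + card (Sn d n (\<lambda>a b c. qR4 a b c \<or> pF a b c))"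
    apply (rule card_Sn_disj) subgoal for a b c by (cases rule: ord3_cases[of a b c]) (auto simp: pdefs) done
  have e2: "card (Sn d n (\<lambda>a b c. qR2 a b c \<or> (pE1 a b c \<or> (qR4 a b c \<or> pF a b c)))) = card (Sn d n qR2) + card (Sn d n (\<lambda>a b c. pE1 a b c \<or> (qR4 a b c \<or> pF a b c)))"
    apply (rule card_Sn_disj) subgoal for a b c by (cases rule: ord3_cases[of a b c]) (auto simp: pdefs) done
  have e1: "card (Sn d n (\<lambda>a b c. qR1 a b c \<or> (qR2 a b c \<or> (pE1 a b c \<or> (qR4 a b c \<or> pF a b c))))) = card (Sn d n qR1) + card (Sn d n (\<lambda>a b c. qR2 a b c \<or> (pE1 a b c \<or> (qR4 a b c \<or> pF a b c))))"
    apply (rule card_Sn_disj) subgoal for a b c by (cases rule: ord3_cases[of a b c]) (auto simp: pdefs) done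
  have "Sn d n qR = Sn d n (\<lambda>a b c. qR1 a b c \<or> (qR2 a b c \<or> (pE1 a b c \<or> (qR4 a b c \<or> pF a b c))))"
    apply (rule Sn_cong) subgoal for a b c by (cases rule: ord3_cases[of a b c]) (auto simp: pdefs) done
  moreover have "card (Sn d n qR1) = card (Sn d n pD)"
  proof -
    have "Sn d n qR1 = Sn d n (\<lambda>a b c. pD b c a)" apply (rule Sn_cong) subgoal for a b c by (cases rule: ord3_cases[of a b c]) (auto simp: pdefs) done
    then show ?thesis using card_Sn_rot[of d n pD] by simp
  qed
  moreover have "card (Sn d n qR2) = card (Sn d n pD)"
  proof -
    have "Sn d n qR2 = Sn d n (\<lambda>a b c. pD a c b)" apply (rule Sn_cong) subgoal for a b c by (cases rule: ord3_cases[of a b c]) (auto simp: pdefs) done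
    then show ?thesis using card_Sn_sw23[of d n pD] by simp
  qed
  moreover have "card (Sn d n qR4) = card (Sn d n pE2)"
  proof -
    have "Sn d n qR4 = Sn d n (\<lambda>a b c. (\<lambda>x y z. pE2 y z x) b c a)" apply (rule Sn_cong) subgoal for a b c by (cases rule: ord3_cases[of a b c]) (auto simp: pdefs) done
    then have "card (Sn d n qR4) = card (Sn d n (\<lambda>x y z. pE2 y z x))" using card_Sn_rot[of d n "\<lambda>x y z. pE2 y z x"] by simp
    also have "\<dots> = card (Sn d n pE2)" using card_Sn_rot[of d n pE2] by simp
    finally show ?thesis .
  qed
  ultimately show ?thesis using e1 e2 e3 e4 by simp
qed

lemma card_all: "card (Sn d n (\<lambda>a b c. True)) = 2 * card (Sn d n pT) + card (Sn d n qR)"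
proof -
  have "Sn d n (\<lambda>a b c. True) = Sn d n (\<lambda>a b c. pT a b c \<or> (qT' a b c \<or> qR a b c))"
    apply (rule Sn_cong) subgoal for a b c by (cases rule: ord3_cases[of a b c]) (auto simp: pdefs) done
  moreover have "card (Sn d n (\<lambda>a b c. pT a b c \<or> (qT' a b c \<or> qR a b c))) = card (Sn d n pT) + card (Sn d n (\<lambda>a b c. qT' a b c \<or> qR a b c))"
    apply (rule card_Sn_disj) subgoal for a b c by (cases rule: ord3_cases[of a b c]) (auto simp: pdefs) done
  moreover have "card (Sn d n (\<lambda>a b c. qT' a b c \<or> qR a b c)) = card (Sn d n qT') + card (Sn d n qR)"
    apply (rule card_Sn_disj) subgoal for a b c by (cases rule: ord3_cases[of a b c]) (auto simp: pdefs) done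
  moreover have "card (Sn d n qT') = card (Sn d n pT)"
  proof -
    have "Sn d n qT' = Sn d n (\<lambda>a b c. pT b a c)" apply (rule Sn_cong) subgoal for a b c by (cases rule: ord3_cases[of a b c]) (auto simp: pdefs) done
    then show ?thesis using card_Sn_sw12[of d n pT] by simp
  qed
  ultimately show ?thesis by simp
qed

lemma p3_Sn: assumes "d \<ge> 1" shows "p3 (d - 1) n = card (Sn d n (\<lambda>a b c. c \<le> b \<and> b \<le> a))"
proof -
  have "{(a,b,c). a \<le> d - 1 \<and> (b::nat) \<le> a \<and> (c::nat) \<le> b \<and> int (a+b+c) = n} = Sn d n (\<lambda>a b c. c \<le> b \<and> b \<le> a)"
    using assms by (auto simp: Sn_def)
  then show ?thesis by (simp add: p3_def)
qed

lemma p3plus_Sn: assumes "d \<ge> 1" shows "p3plus (d - 1) n = card (Sn d n pD)"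
proof -
  have "{(a,b,c). a \<le> d - 1 \<and> (b::nat) < a \<and> (c::nat) < b \<and> int (a+b+c) = n} = Sn d n pD"
    using assms by (auto simp: Sn_def pD_def)
  then show ?thesis by (simp add: p3plus_def)
qed

lemma card_P: "card (Sn d n (\<lambda>a b c. c \<le> b \<and> b \<le> a)) = card (Sn d n pD) + card (Sn d n pE1) + card (Sn d n pE2) + card (Sn d n pF)"
proof -
  have "Sn d n (\<lambda>a b c. c \<le> b \<and> b \<le> a) = Sn d n (\<lambda>a b c. pD a b c \<or> (pE1 a b c \<or> (pE2 a b c \<or> pF a b c)))"
    apply (rule Sn_cong) subgoal for a b c by (cases rule: ord3_cases[of a b c]) (auto simp: pdefs) done
  moreover have "card (Sn d n (\<lambda>a b c. pD a b c \<or> (pE1 a b c \<or> (pE2 a b c \<or> pF a b c)))) = card (Sn d n pD) + card (Sn d n (\<lambda>a b c. pE1 a b c \<or> (pE2 a b c \<or> pF a b c)))"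
    apply (rule card_Sn_disj) subgoal for a b c by (cases rule: ord3_cases[of a b c]) (auto simp: pdefs) done
  moreover have "card (Sn d n (\<lambda>a b c. pE1 a b c \<or> (pE2 a b c \<or> pF a b c))) = card (Sn d n pE1) + card (Sn d n (\<lambda>a b c. pE2 a b c \<or> pF a b c))"
    apply (rule card_Sn_disj) subgoal for a b c by (cases rule: ord3_cases[of a b c]) (auto simp: pdefs) done
  moreover have "card (Sn d n (\<lambda>a b c. pE2 a b c \<or> pF a b c)) = card (Sn d n pE2) + card (Sn d n pF)"
    apply (rule card_Sn_disj) subgoal for a b c by (cases rule: ord3_cases[of a b c]) (auto simp: pdefs) done
  ultimately show ?thesis by simp
qed

lemma main_count: assumes "d \<ge> 1"
  shows "int (card (Sn d n (\<lambda>a b c. True))) = 2 * int (card (Sn d n pT)) + int (p3 (d - 1) n) + int (p3plus (d - 1) n)"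
  using card_all[of d n] card_R[of d n] card_P[of d n] p3_Sn[OF assms, of n] p3plus_Sn[OF assms, of n] by simp


definition G :: "nat \<Rightarrow> int \<Rightarrow> nat" where
  "G d s = card {(b,c). b < d \<and> c < d \<and> int (b + c) = s}"

lemma M_sum: "card (Sn d n (\<lambda>a b c. True)) = (\<Sum>a<d. G d (n - int a))"
proof -
  have "Sn d n (\<lambda>a b c. True) = Sigma {..<d} (\<lambda>a. {(b,c). b < d \<and> c < d \<and> int (b + c) = n - int a})"
    by (auto simp: Sn_def)
  moreover have "finite {(b,c). b < d \<and> c < d \<and> int (b + c) = n - int a}" for a
  proof -
    have "{(b,c). b < d \<and> c < d \<and> int (b + c) = n - int a} \<subseteq> {..<d} \<times> {..<d}" by auto
    then show ?thesis by (rule finite_subset) auto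
  qed
  ultimately show ?thesis by (simp add: card_SigmaI G_def)
qed

lemma G_int: "G d s = card {b::int. 0 \<le> b \<and> b < int d \<and> 0 \<le> s - b \<and> s - b < int d}"
proof -
  have "bij_betw (\<lambda>(b,c). int b) {(b,c). b < d \<and> c < d \<and> int (b + c) = s}
      {b::int. 0 \<le> b \<and> b < int d \<and> 0 \<le> s - b \<and> s - b < int d}"
  proof (rule bij_betw_byWitness[where f' = "\<lambda>b. (nat b, nat (s - b))"])
    show "\<forall>a\<in>{(b,c). b < d \<and> c < d \<and> int (b + c) = s}. (\<lambda>b. (nat b, nat (s - b))) ((\<lambda>(b,c). int b) a) = a"
      by auto
    show "\<forall>a'\<in>{b::int. 0 \<le> b \<and> b < int d \<and> 0 \<le> s - b \<and> s - b < int d}. (\<lambda>(b,c). int b) ((\<lambda>b. (nat b, nat (s - b))) a') = a'"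
      by auto
    show "(\<lambda>(b,c). int b) ` {(b,c). b < d \<and> c < d \<and> int (b + c) = s} \<subseteq> {b::int. 0 \<le> b \<and> b < int d \<and> 0 \<le> s - b \<and> s - b < int d}"
      by auto
    show "(\<lambda>b. (nat b, nat (s - b))) ` {b::int. 0 \<le> b \<and> b < int d \<and> 0 \<le> s - b \<and> s - b < int d} \<subseteq> {(b,c). b < d \<and> c < d \<and> int (b + c) = s}"
      by auto
  qed
  then show ?thesis unfolding G_def by (rule bij_betw_same_card)
qed

lemma G_val: "int (G d s) = max 0 (min (int d - 1) s - max 0 (s - int d + 1) + 1)"
proof -
  have "{b::int. 0 \<le> b \<and> b < int d \<and> 0 \<le> s - b \<and> s - b < int d} = {max 0 (s - int d + 1) .. min (int d - 1) s}"
    by auto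
  then show ?thesis using G_int[of d s] by simp
qed

lemma M_diff: "int (card (Sn d n (\<lambda>a b c. True))) - int (card (Sn d (n - 1) (\<lambda>a b c. True)))
   = int (G d n) - int (G d (n - int d))"
proof -
  define f where "f k = - int (G d (n - int k))" for k :: nat
  have "int (card (Sn d n (\<lambda>a b c. True))) - int (card (Sn d (n - 1) (\<lambda>a b c. True)))
     = (\<Sum>a<d. int (G d (n - int a)) - int (G d (n - 1 - int a)))"
    by (simp add: M_sum sum_subtractf)
  also have "\<dots> = (\<Sum>a<d. f (Suc a) - f a)"
    by (rule sum.cong) (simp_all add: f_def algebra_simps)
  also have "\<dots> = f d - f 0" by (rule sum_lessThan_telescope)
  finally show ?thesis by (simp add: f_def)
qed

lemma mult_M:
  assumes d: "d \<ge> 1" and j: "j \<le> (3 * (d - 1)) div 2"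
  shows "mult d j = int (card (Sn d (int j) (\<lambda>a b c. True))) - int (card (Sn d (int j - 1) (\<lambda>a b c. True)))"
proof -
  have jj: "2 * j \<le> 3 * (d - 1)" using j by linarith
  show ?thesis
  proof (cases "j \<le> d - 1")
    case True
    then show ?thesis unfolding M_diff mult_def G_val using d by simp
  next
    case False
    then show ?thesis unfolding M_diff mult_def G_val using d jj by simp
  qed
qed

definition scH :: "'k::field \<Rightarrow> ((nat \<Rightarrow> 'k) \<Rightarrow> ((nat \<Rightarrow> nat) \<Rightarrow> 'k)) \<Rightarrow> ((nat \<Rightarrow> 'k) \<Rightarrow> ((nat \<Rightarrow> nat) \<Rightarrow> 'k))" where
  "scH = (\<lambda>c \<phi>. \<lambda>v e. c * \<phi> v e)"

interpretation vH: vector_space "scH :: 'k::field \<Rightarrow> _"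
  by unfold_locales (simp_all add: scH_def fun_eq_iff algebra_simps)

interpretation vHF: vector_space_pair "scH :: 'k::field \<Rightarrow> _" "scF :: 'k::field \<Rightarrow> _"
  by unfold_locales

definition v0 :: "nat \<Rightarrow> 'k::field" where "v0 = (\<lambda>i. if i = 0 then 1 else if i = 1 then -1 else 0)"
definition v1 :: "nat \<Rightarrow> 'k::field" where "v1 = (\<lambda>i. if i = 1 then 1 else if i = 2 then -1 else 0)"
definition v2 :: "nat \<Rightarrow> 'k::field" where "v2 = (\<lambda>i. if i = 0 then -1 else if i = 2 then 1 else 0)"

lemma inv_cy: "inv cy 0 = 2" "inv cy (Suc 0) = 0" "inv cy 2 = 1" "i \<ge> 3 \<Longrightarrow> inv cy i = i"
proof -
  note pi = permutes_inverses(2)[OF cy_perm]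
  show "inv cy 0 = 2" using pi[of 2] by simp
  show "inv cy (Suc 0) = 0" using pi[of 0] by simp
  show "inv cy 2 = 1" using pi[of 1] by simp
  assume "i \<ge> 3"
  then have "cy i = i" using perm3_fix[OF cy_perm] by simp
  then show "inv cy i = i" using pi[of i] by simp
qed

lemma inv_tau: "inv tau 0 = 1" "inv tau (Suc 0) = 0" "inv tau 2 = 2" "i \<ge> 3 \<Longrightarrow> inv tau i = i"
proof -
  note pi = permutes_inverses(2)[OF tau_perm]
  show "inv tau 0 = 1" using pi[of 1] by simp
  show "inv tau (Suc 0) = 0" using pi[of 0] by simp
  show "inv tau 2 = 2" using pi[of 2] by simp
  assume "i \<ge> 3"
  then have "tau i = i" using perm3_fix[OF tau_perm] by simp
  then show "inv tau i = i" using pi[of i] by simp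
qed

lemma actV_cy_v0: "actV cy v0 = v1"
proof
  fix i
  show "actV cy v0 i = v1 i"
    by (cases "i = 0"; cases "i = 1"; cases "i = 2") (auto simp: actV_def v0_def v1_def inv_cy)
qed

lemma actV_cy_v1: "actV cy v1 = v2"
proof
  fix i
  show "actV cy v1 i = v2 i"
    by (cases "i = 0"; cases "i = 1"; cases "i = 2") (auto simp: actV_def v2_def v1_def inv_cy)
qed

lemma actV_tau_v0: "actV tau v0 = (\<lambda>i. (-1) * v0 i)"
proof
  fix i
  show "actV tau v0 i = (-1) * v0 i"
    by (cases "i = 0"; cases "i = 1"; cases "i = 2") (auto simp: actV_def v0_def inv_tau)
qed

lemma std_v0: "v0 \<in> StdRep" and std_vv1: "v1 \<in> StdRep"
  by (auto simp: StdRep_def v0_def v1_def)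

lemma std_sum: "v \<in> StdRep \<Longrightarrow> v 0 + v 1 + v 2 = 0" by (simp add: StdRep_def)
lemma std_v1: assumes "v \<in> StdRep" shows "v 1 = - v 0 - v 2"
  using std_sum[OF assms] by algebra

lemma std_add: assumes "v \<in> StdRep" "w \<in> StdRep" shows "(\<lambda>i. v i + w i) \<in> StdRep"
  unfolding StdRep_def mem_Collect_eq
proof (intro conjI allI impI)
  fix i :: nat assume "i \<ge> 3" then show "v i + w i = 0" using assms by (simp add: StdRep_def)
next
  show "(v 0 + w 0) + (v 1 + w 1) + (v 2 + w 2) = 0" using std_sum[OF assms(1)] std_sum[OF assms(2)] by algebra
qed
lemma std_scale: assumes "v \<in> StdRep" shows "(\<lambda>i. c * v i) \<in> StdRep"
  unfolding StdRep_def mem_Collect_eq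
proof (intro conjI allI impI)
  fix i :: nat assume "i \<ge> 3" then show "c * v i = 0" using assms by (simp add: StdRep_def)
next
  show "c * v 0 + c * v 1 + c * v 2 = 0" using std_sum[OF assms(1)] by algebra
qed

lemma std_act: assumes s: "\<sigma> permutes {..<3}" and v: "v \<in> StdRep" shows "actV \<sigma> v \<in> StdRep"
proof -
  have isg: "inv \<sigma> permutes {..<3}" using permutes_inv[OF s] .
  have "(\<Sum>i<3. v (inv \<sigma> i)) = (\<Sum>i<3. v i)"
    using sum.permute[OF isg, of v] by (simp add: comp_def)
  then have "v (inv \<sigma> 0) + v (inv \<sigma> 1) + v (inv \<sigma> 2) = v 0 + v 1 + v 2" by (simp add: sum3)
  moreover have "inv \<sigma> i = i" if "i \<ge> 3" for i using perm3_fix[OF isg that] .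
  ultimately show ?thesis using v by (simp add: StdRep_def actV_def)
qed

lemma Hom_formula:
  assumes phi: "\<phi> \<in> HomS3 W" and v: "v \<in> StdRep"
  shows "\<phi> v = (\<lambda>e. v 0 * \<phi> v0 e - v 2 * actA cy (\<phi> v0) e)"
proof -
  note H = phi[unfolded HomS3_def, simplified]
  have decomp: "v = (\<lambda>i. (\<lambda>i. v 0 * v0 i) i + (\<lambda>i. (- v 2) * v1 i) i)"
  proof
    fix i
    show "v i = v 0 * v0 i + (- v 2) * v1 i"
      using v std_v1[OF v] by (cases "i = 0"; cases "i = 1"; cases "i = 2") (auto simp: v0_def v1_def StdRep_def algebra_simps)
  qed
  have s0: "(\<lambda>i. v 0 * v0 i) \<in> StdRep" using std_scale std_v0 by blast
  have s1: "(\<lambda>i. (- v 2) * v1 i) \<in> StdRep" using std_scale std_vv1 by blast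
  have "\<phi> v = (\<lambda>e. \<phi> (\<lambda>i. v 0 * v0 i) e + \<phi> (\<lambda>i. (- v 2) * v1 i) e)"
    using H s0 s1 decomp by metis
  also have "\<phi> (\<lambda>i. v 0 * v0 i) = (\<lambda>e. v 0 * \<phi> v0 e)" using H std_v0 by blast
  also have "\<phi> (\<lambda>i. (- v 2) * v1 i) = (\<lambda>e. (- v 2) * \<phi> v1 e)" using H std_vv1 by blast
  also have "\<phi> v1 = actA cy (\<phi> v0)" using H std_v0 cy_perm actV_cy_v0 by metis
  finally show ?thesis by simp
qed


definition Wgood :: "((nat \<Rightarrow> nat) \<Rightarrow> 'k::field) set \<Rightarrow> bool" where
  "Wgood W \<longleftrightarrow> 0 \<in> W \<and> (\<forall>f\<in>W. \<forall>g\<in>W. f + g \<in> W) \<and> (\<forall>c. \<forall>f\<in>W. scF c f \<in> W)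
     \<and> (\<forall>f\<in>W. actA cy f \<in> W)"

lemma Hom_subspace:
  assumes W: "Wgood (W :: ((nat \<Rightarrow> nat) \<Rightarrow> 'k::field) set)"
  shows "vH.subspace (HomS3 W)"
  unfolding vH.subspace_def
proof (intro conjI ballI allI)
  show "0 \<in> HomS3 W"
    using W by (simp add: HomS3_def Wgood_def zero_fun_def actA_def)
next
  fix \<phi> \<psi> :: "(nat \<Rightarrow> 'k) \<Rightarrow> (nat \<Rightarrow> nat) \<Rightarrow> 'k" assume p: "\<phi> \<in> HomS3 W" and q: "\<psi> \<in> HomS3 W"
  note P = p[unfolded HomS3_def, simplified] and Q = q[unfolded HomS3_def, simplified]
  show "\<phi> + \<psi> \<in> HomS3 W"
    unfolding HomS3_def mem_Collect_eq
  proof (intro conjI ballI allI impI)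
    fix v :: "nat \<Rightarrow> 'k" assume "v \<in> StdRep" then show "(\<phi> + \<psi>) v \<in> W" using P Q W by (simp add: Wgood_def)
  next
    fix v :: "nat \<Rightarrow> 'k" assume "v \<notin> StdRep" then show "(\<phi> + \<psi>) v = (\<lambda>_. 0)" using P Q by (simp add: fun_eq_iff)
  next
    fix v w :: "nat \<Rightarrow> 'k" assume "v \<in> StdRep" "w \<in> StdRep"
    then show "(\<phi> + \<psi>) (\<lambda>i. v i + w i) = (\<lambda>e. (\<phi> + \<psi>) v e + (\<phi> + \<psi>) w e)"
      using P Q by (simp add: fun_eq_iff algebra_simps)
  next
    fix c and v :: "nat \<Rightarrow> 'k" assume "v \<in> StdRep"
    then show "(\<phi> + \<psi>) (\<lambda>i. c * v i) = (\<lambda>e. c * (\<phi> + \<psi>) v e)"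
      using P Q by (simp add: fun_eq_iff algebra_simps)
  next
    fix \<sigma> :: "nat \<Rightarrow> nat" and v :: "nat \<Rightarrow> 'k" assume "\<sigma> permutes {..<3}" "v \<in> StdRep"
    then show "(\<phi> + \<psi>) (actV \<sigma> v) = actA \<sigma> ((\<phi> + \<psi>) v)"
      using P Q by (simp add: actA_add)
  qed
next
  fix c and \<phi> :: "(nat \<Rightarrow> 'k) \<Rightarrow> (nat \<Rightarrow> nat) \<Rightarrow> 'k" assume p: "\<phi> \<in> HomS3 W"
  note P = p[unfolded HomS3_def, simplified]
  show "scH c \<phi> \<in> HomS3 W"
    unfolding HomS3_def mem_Collect_eq
  proof (intro conjI ballI allI impI)
    fix v :: "nat \<Rightarrow> 'k" assume "v \<in> StdRep" then show "scH c \<phi> v \<in> W" using P W by (simp add: Wgood_def scH_def scF_def)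
  next
    fix v :: "nat \<Rightarrow> 'k" assume "v \<notin> StdRep" then show "scH c \<phi> v = (\<lambda>_. 0)" using P by (simp add: scH_def)
  next
    fix v w :: "nat \<Rightarrow> 'k" assume "v \<in> StdRep" "w \<in> StdRep"
    then show "scH c \<phi> (\<lambda>i. v i + w i) = (\<lambda>e. scH c \<phi> v e + scH c \<phi> w e)"
      using P by (simp add: scH_def fun_eq_iff algebra_simps)
  next
    fix c' and v :: "nat \<Rightarrow> 'k" assume "v \<in> StdRep"
    then show "scH c \<phi> (\<lambda>i. c' * v i) = (\<lambda>e. c' * scH c \<phi> v e)"
      using P by (simp add: scH_def fun_eq_iff algebra_simps)
  next
    fix \<sigma> :: "nat \<Rightarrow> nat" and v :: "nat \<Rightarrow> 'k" assume "\<sigma> permutes {..<3}" "v \<in> StdRep"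
    then show "scH c \<phi> (actV \<sigma> v) = actA \<sigma> (scH c \<phi> v)"
      using P by (simp add: scH_def actA_def fun_eq_iff)
  qed
qed

definition Phi :: "((nat \<Rightarrow> 'k::field) \<Rightarrow> ((nat \<Rightarrow> nat) \<Rightarrow> 'k)) \<Rightarrow> ((nat \<Rightarrow> nat) \<Rightarrow> 'k)" where
  "Phi \<phi> = \<phi> v0"

lemma lin_Phi: "Vector_Spaces.linear scH scF (Phi :: _ \<Rightarrow> ((nat \<Rightarrow> nat) \<Rightarrow> 'k::field))"
proof -
  have "vector_space (scH :: 'k \<Rightarrow> _)" by unfold_locales (simp_all add: scH_def fun_eq_iff algebra_simps)
  then show ?thesis unfolding Vector_Spaces.linear_iff using vs_scF
    by (simp add: Phi_def scH_def scF_def fun_eq_iff)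
qed

lemma Phi_inj: "inj_on Phi (HomS3 W)"
proof (rule inj_onI)
  fix \<phi> \<psi> assume p: "\<phi> \<in> HomS3 W" and q: "\<psi> \<in> HomS3 W" and e: "Phi \<phi> = Phi \<psi>"
  show "\<phi> = \<psi>"
  proof
    fix v
    show "\<phi> v = \<psi> v"
    proof (cases "v \<in> StdRep")
      case True
      then show ?thesis using Hom_formula[OF p True] Hom_formula[OF q True] e by (simp add: Phi_def)
    next
      case False
      then show ?thesis using p q by (simp add: HomS3_def)
    qed
  qed
qed


definition perm3 :: "nat \<Rightarrow> nat \<Rightarrow> nat \<Rightarrow> nat \<Rightarrow> nat" where
  "perm3 p q r = (\<lambda>i. if i = 0 then p else if i = 1 then q else if i = 2 then r else i)"

lemma perm3_app[simp]: "perm3 p q r 0 = p" "perm3 p q r (Suc 0) = q" "perm3 p q r 2 = r"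
  by (auto simp: perm3_def)

lemma tau_fix: "i \<ge> 3 \<Longrightarrow> tau i = i" using perm3_fix[OF tau_perm] .
lemma cy_fix: "i \<ge> 3 \<Longrightarrow> cy i = i" using perm3_fix[OF cy_perm] .

lemma perm3_tau: "perm3 p q r \<circ> tau = perm3 q p r"
proof
  fix i
  show "(perm3 p q r \<circ> tau) i = perm3 q p r i"
    by (cases "i = 0"; cases "i = 1"; cases "i = 2") (auto simp: perm3_def tau_fix)
qed

lemma perm3_cy: "perm3 p q r \<circ> cy = perm3 q r p"
proof
  fix i
  show "(perm3 p q r \<circ> cy) i = perm3 q r p i"
    by (cases "i = 0"; cases "i = 1"; cases "i = 2") (auto simp: perm3_def cy_fix)
qed

lemma perm3_id: "perm3 0 1 2 = id" by (auto simp: perm3_def fun_eq_iff)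

lemma tau_perm3: "tau = perm3 1 0 2"
  using perm3_tau[of 0 1 2] unfolding perm3_id by simp
lemma cy_perm3: "cy = perm3 1 2 0"
  using perm3_cy[of 0 1 2] unfolding perm3_id by simp

lemma perm3_enum:
  assumes s: "\<sigma> permutes {..<3}"
  shows "\<sigma> \<in> {perm3 0 1 2, perm3 0 2 1, perm3 1 0 2, perm3 1 2 0, perm3 2 0 1, perm3 2 1 0}"
proof -
  have eq: "\<sigma> = perm3 (\<sigma> 0) (\<sigma> 1) (\<sigma> 2)"
  proof
    fix i show "\<sigma> i = perm3 (\<sigma> 0) (\<sigma> 1) (\<sigma> 2) i"
      using perm3_fix[OF s, of i] by (auto simp: perm3_def)
  qed
  have r: "\<sigma> i < 3" if "i < 3" for i using permutes_in_image[OF s] that by auto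
  have inj: "inj \<sigma>" using permutes_inj[OF s] .
  have d: "\<sigma> 0 \<noteq> \<sigma> 1" "\<sigma> 0 \<noteq> \<sigma> 2" "\<sigma> 1 \<noteq> \<sigma> 2"
    using inj by (auto simp: inj_eq)
  have "\<sigma> 0 < 3" "\<sigma> 1 < 3" "\<sigma> 2 < 3" using r by auto
  then have c: "\<sigma> 0 = 0 \<or> \<sigma> 0 = 1 \<or> \<sigma> 0 = 2" "\<sigma> 1 = 0 \<or> \<sigma> 1 = 1 \<or> \<sigma> 1 = 2"
    "\<sigma> 2 = 0 \<or> \<sigma> 2 = 1 \<or> \<sigma> 2 = 2" by linarith+
  define p q r where "p = \<sigma> 0" "q = \<sigma> 1" "r = \<sigma> 2"
  have "perm3 p q r \<in> {perm3 0 1 2, perm3 0 2 1, perm3 1 0 2, perm3 1 2 0, perm3 2 0 1, perm3 2 1 0}"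
    using c d unfolding p_q_r_def[symmetric] by (elim disjE) simp_all
  then show ?thesis using eq p_q_r_def by simp
qed


lemma inv_perm3:
  assumes "\<sigma> permutes {..<3}" "\<sigma> = perm3 p q r"
  shows "inv \<sigma> p = 0" "inv \<sigma> q = Suc 0" "inv \<sigma> r = 2"
  using permutes_inverses(2)[OF assms(1), of 0] permutes_inverses(2)[OF assms(1), of "Suc 0"]
    permutes_inverses(2)[OF assms(1), of 2] assms(2) by simp_all

lemma equiv_core:
  fixes w :: "(nat \<Rightarrow> nat) \<Rightarrow> 'k::field" and v :: "nat \<Rightarrow> 'k"
  assumes R1: "\<And>e. w (e \<circ> tau) = - w e" and R2: "\<And>e. w e + w (e \<circ> cy) + w (e \<circ> cy \<circ> cy) = 0"
    and s: "\<sigma> permutes {..<3}" and v: "v \<in> StdRep"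
  shows "v (inv \<sigma> 0) * w e - v (inv \<sigma> 2) * w (e \<circ> cy) = v 0 * w (e \<circ> \<sigma>) - v 2 * w (e \<circ> \<sigma> \<circ> cy)"
proof -
  have cyS: "cy = perm3 (Suc 0) 2 0" using cy_perm3 by simp
  have cycy: "cy \<circ> cy = perm3 2 0 (Suc 0)"
  proof -
    have "cy \<circ> cy = perm3 (Suc 0) 2 0 \<circ> cy" by (subst (1) cyS) (rule refl)
    then show ?thesis using perm3_cy[of "Suc 0" 2 0] by simp
  qed
  have we: "w e = w (e \<circ> perm3 0 (Suc 0) 2)" using perm3_id by simp
  have wc: "w (e \<circ> cy) = w (e \<circ> perm3 (Suc 0) 2 0)" using cy_perm3 by simp
  have a: "w (e \<circ> perm3 2 0 (Suc 0)) = - w (e \<circ> perm3 0 (Suc 0) 2) - w (e \<circ> perm3 (Suc 0) 2 0)"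
    using R2[of e] we wc cycy by (simp add: o_assoc[symmetric] eq_neg_iff_add_eq_0 algebra_simps)
  have b: "w (e \<circ> perm3 (Suc 0) 0 2) = - w (e \<circ> perm3 0 (Suc 0) 2)"
    using R1[of e] we tau_perm3 by simp
  have c: "w (e \<circ> perm3 2 (Suc 0) 0) = - w (e \<circ> perm3 (Suc 0) 2 0)"
    using R1[of "e \<circ> perm3 (Suc 0) 2 0"] perm3_tau[of "Suc 0" 2 0] by (simp add: o_assoc[symmetric])
  have dd: "w (e \<circ> perm3 0 2 (Suc 0)) = - w (e \<circ> perm3 2 0 (Suc 0))"
    using R1[of "e \<circ> perm3 2 0 (Suc 0)"] perm3_tau[of 2 0 "Suc 0"] by (simp add: o_assoc[symmetric])
  have v1: "v (Suc 0) = - v 0 - v 2" using std_v1[OF v] by simp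
  have sc: "e \<circ> \<sigma> \<circ> cy = e \<circ> (\<sigma> \<circ> cy)" by (simp add: o_assoc)
  have E: "\<sigma> \<in> {perm3 0 1 2, perm3 0 2 1, perm3 1 0 2, perm3 1 2 0, perm3 2 0 1, perm3 2 1 0}"
    using perm3_enum[OF s] .
  have gen: "(e \<circ> perm3 p q r) \<circ> cy = e \<circ> perm3 q r p" for p q r
    by (simp only: o_assoc[symmetric] perm3_cy)
  from E consider "\<sigma> = perm3 0 (Suc 0) 2" | "\<sigma> = perm3 0 2 (Suc 0)" | "\<sigma> = perm3 (Suc 0) 0 2"
      | "\<sigma> = perm3 (Suc 0) 2 0" | "\<sigma> = perm3 2 0 (Suc 0)" | "\<sigma> = perm3 2 (Suc 0) 0" by auto
  then show ?thesis
  proof cases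
    case 1 note iv = inv_perm3[OF s 1]
    show ?thesis unfolding 1
      by (simp only: iv[unfolded 1] gen we wc a b c dd v1; simp add: algebra_simps)
  next
    case 2 note iv = inv_perm3[OF s 2]
    show ?thesis unfolding 2
      by (simp only: iv[unfolded 2] gen we wc a b c dd v1; simp add: algebra_simps)
  next
    case 3 note iv = inv_perm3[OF s 3]
    show ?thesis unfolding 3
      by (simp only: iv[unfolded 3] gen we wc a b c dd v1; simp add: algebra_simps)
  next
    case 4 note iv = inv_perm3[OF s 4]
    show ?thesis unfolding 4
      by (simp only: iv[unfolded 4] gen we wc a b c dd v1; simp add: algebra_simps)
  next
    case 5 note iv = inv_perm3[OF s 5]
    show ?thesis unfolding 5
      by (simp only: iv[unfolded 5] gen we wc a b c dd v1; simp add: algebra_simps)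
  next
    case 6 note iv = inv_perm3[OF s 6]
    show ?thesis unfolding 6
      by (simp only: iv[unfolded 6] gen we wc a b c dd v1; simp add: algebra_simps)
  qed
qed


definition Xset :: "((nat \<Rightarrow> nat) \<Rightarrow> 'k::field) set \<Rightarrow> ((nat \<Rightarrow> nat) \<Rightarrow> 'k) set" where
  "Xset W = {w \<in> W. actA tau w = - w \<and> w + actA cy w + actA cy (actA cy w) = 0}"

lemma Hom_D:
  assumes p: "\<phi> \<in> HomS3 W"
  shows "\<And>v. v \<in> StdRep \<Longrightarrow> \<phi> v \<in> W"
    "\<And>v w. v \<in> StdRep \<Longrightarrow> w \<in> StdRep \<Longrightarrow> \<phi> (\<lambda>i. v i + w i) = (\<lambda>e. \<phi> v e + \<phi> w e)"
    "\<And>c v. v \<in> StdRep \<Longrightarrow> \<phi> (\<lambda>i. c * v i) = (\<lambda>e. c * \<phi> v e)"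
    "\<And>\<sigma> v. \<sigma> permutes {..<3} \<Longrightarrow> v \<in> StdRep \<Longrightarrow> \<phi> (actV \<sigma> v) = actA \<sigma> (\<phi> v)"
  using p unfolding HomS3_def by blast+

lemma Phi_into:
  assumes p: "\<phi> \<in> HomS3 W" shows "Phi \<phi> \<in> Xset W"
proof -
  note H = Hom_D[OF p]
  have inW: "\<phi> v0 \<in> W" using H(1)[OF std_v0] .
  have "\<phi> (actV tau v0) = actA tau (\<phi> v0)" using H(4)[OF tau_perm std_v0] .
  moreover have "\<phi> (actV tau v0) = (\<lambda>e. (-1) * \<phi> v0 e)" unfolding actV_tau_v0 using H(3)[OF std_v0] .
  ultimately have t: "actA tau (\<phi> v0) = - \<phi> v0" by (simp add: fun_eq_iff)
  have c1: "actA cy (\<phi> v0) = \<phi> v1" using H(4)[OF cy_perm std_v0] unfolding actV_cy_v0 by simp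
  have c2: "actA cy (\<phi> v1) = \<phi> v2" using H(4)[OF cy_perm std_vv1] unfolding actV_cy_v1 by simp
  have std2: "v2 \<in> StdRep" by (auto simp: StdRep_def v2_def)
  have s01: "(\<lambda>i. v0 i + v1 i) \<in> StdRep" using std_add std_v0 std_vv1 by blast
  have e1: "\<phi> (\<lambda>i. v0 i + v1 i) = (\<lambda>e. \<phi> v0 e + \<phi> v1 e)" using H(2)[OF std_v0 std_vv1] .
  have e2: "\<phi> (\<lambda>i. (\<lambda>i. v0 i + v1 i) i + v2 i) = (\<lambda>e. \<phi> (\<lambda>i. v0 i + v1 i) e + \<phi> v2 e)"
    using H(2)[OF s01 std2] .
  have e3: "(\<lambda>i. (\<lambda>i. v0 i + v1 i) i + v2 i) = (\<lambda>i. (0::'a) * v0 i)"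
    by (auto simp: v0_def v1_def v2_def fun_eq_iff)
  have e4: "\<phi> (\<lambda>i. 0 * v0 i) = (\<lambda>e. 0 * \<phi> v0 e)" using H(3)[OF std_v0] .
  have "\<phi> v0 + \<phi> v1 + \<phi> v2 = 0"
  proof
    fix e
    have "\<phi> v0 e + \<phi> v1 e + \<phi> v2 e = \<phi> (\<lambda>i. (\<lambda>i. v0 i + v1 i) i + v2 i) e"
      using e1 e2 by simp
    also have "\<dots> = 0" unfolding e3 e4 by simp
    finally show "(\<phi> v0 + \<phi> v1 + \<phi> v2) e = 0 e" by simp
  qed
  then have "\<phi> v0 + actA cy (\<phi> v0) + actA cy (actA cy (\<phi> v0)) = 0" using c1 c2 by simp
  then show ?thesis using inW t by (simp add: Xset_def Phi_def)
qed

lemma Phi_onto: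
  assumes W: "Wgood W" and w: "w \<in> Xset W"
  shows "\<exists>\<phi>\<in>HomS3 W. Phi \<phi> = w"
proof -
  have wW: "w \<in> W" and t: "actA tau w = - w" and cyc: "w + actA cy w + actA cy (actA cy w) = 0"
    using w by (auto simp: Xset_def)
  have R1: "w (e \<circ> tau) = - w e" for e using fun_cong[OF t, of e] by (simp add: actA_def)
  have R2: "w e + w (e \<circ> cy) + w (e \<circ> cy \<circ> cy) = 0" for e using fun_cong[OF cyc, of e] by (simp add: actA_def)
  define \<phi> where "\<phi> v = (if v \<in> StdRep then (\<lambda>e. v 0 * w e - v 2 * actA cy w e) else (\<lambda>_. 0))" for v
  have ex: "(\<lambda>e. v 0 * w e - v 2 * actA cy w e) = scF (v 0) w + scF (- v 2) (actA cy w)" for v :: "nat \<Rightarrow> 'a"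
    by (simp add: scF_def fun_eq_iff)
  have WW: "0 \<in> W" "\<And>f g. f \<in> W \<Longrightarrow> g \<in> W \<Longrightarrow> f + g \<in> W" "\<And>c f. f \<in> W \<Longrightarrow> scF c f \<in> W"
    "\<And>f. f \<in> W \<Longrightarrow> actA cy f \<in> W"
    using W by (auto simp: Wgood_def)
  have "\<phi> \<in> HomS3 W"
    unfolding HomS3_def mem_Collect_eq
  proof (intro conjI ballI allI impI)
    fix v :: "nat \<Rightarrow> 'a" assume vS: "v \<in> StdRep"
    have "\<phi> v = scF (v 0) w + scF (- v 2) (actA cy w)" unfolding \<phi>_def ex[symmetric] using vS by simp
    moreover have "scF (v 0) w + scF (- v 2) (actA cy w) \<in> W"
      using WW(2)[OF WW(3)[OF wW] WW(3)[OF WW(4)[OF wW]]] .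
    ultimately show "\<phi> v \<in> W" by simp
  next
    fix v :: "nat \<Rightarrow> 'a" assume "v \<notin> StdRep" then show "\<phi> v = (\<lambda>_. 0)" by (simp add: \<phi>_def)
  next
    fix v u :: "nat \<Rightarrow> 'a" assume "v \<in> StdRep" "u \<in> StdRep"
    moreover have "(\<lambda>i. v i + u i) \<in> StdRep" using std_add calculation by blast
    ultimately show "\<phi> (\<lambda>i. v i + u i) = (\<lambda>e. \<phi> v e + \<phi> u e)"
      unfolding \<phi>_def by (simp add: fun_eq_iff algebra_simps)
  next
    fix c and v :: "nat \<Rightarrow> 'a" assume "v \<in> StdRep"
    moreover have "(\<lambda>i. c * v i) \<in> StdRep" using std_scale calculation by blast
    ultimately show "\<phi> (\<lambda>i. c * v i) = (\<lambda>e. c * \<phi> v e)"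
      unfolding \<phi>_def by (simp add: fun_eq_iff algebra_simps)
  next
    fix \<sigma> :: "nat \<Rightarrow> nat" and v :: "nat \<Rightarrow> 'a" assume s: "\<sigma> permutes {..<3}" and v: "v \<in> StdRep"
    have av: "actV \<sigma> v \<in> StdRep" using std_act[OF s v] .
    show "\<phi> (actV \<sigma> v) = actA \<sigma> (\<phi> v)"
    proof
      fix e
      have "\<phi> (actV \<sigma> v) e = v (inv \<sigma> 0) * w e - v (inv \<sigma> 2) * w (e \<circ> cy)"
        using av by (simp add: \<phi>_def actV_def actA_def)
      also have "\<dots> = v 0 * w (e \<circ> \<sigma>) - v 2 * w (e \<circ> \<sigma> \<circ> cy)"
        by (rule equiv_core[OF R1 R2 s v])
      also have "\<dots> = actA \<sigma> (\<phi> v) e" using v by (simp add: \<phi>_def actA_def)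
      finally show "\<phi> (actV \<sigma> v) e = actA \<sigma> (\<phi> v) e" .
    qed
  qed
  moreover have "Phi \<phi> = w"
  proof -
    have v0S: "(v0 :: nat \<Rightarrow> 'a) \<in> StdRep" by (rule std_v0)
    have "\<phi> v0 = (\<lambda>e. v0 0 * w e - v0 2 * actA cy w e)" using v0S unfolding \<phi>_def by simp
    moreover have "v0 0 = (1::'a)" "v0 2 = (0::'a)" by (simp_all add: v0_def)
    ultimately show ?thesis by (simp add: Phi_def)
  qed
  ultimately show ?thesis by blast
qed

lemma Agr_cy: assumes f: "f \<in> Agr d j" shows "actA cy f \<in> Agr d j"
  unfolding Agr_def
proof (safe)
  fix e assume "actA cy f e \<noteq> 0"
  then have "f (e \<circ> cy) \<noteq> 0" by (simp add: actA_def)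
  then have "is_mono d (e \<circ> cy) \<and> (e \<circ> cy) 0 + (e \<circ> cy) 1 + (e \<circ> cy) 2 = j" using Agr_D[OF f] by blast
  then show "is_mono d e" "e 0 + e 1 + e 2 = j" using is_mono_comp[OF cy_perm] by auto
qed

lemma Wgood_KerE: "Wgood (KerE d j :: ((nat \<Rightarrow> nat) \<Rightarrow> 'k::field) set)"
proof -
  have z: "(\<lambda>_. 0) = (0 :: (nat \<Rightarrow> nat) \<Rightarrow> 'k)" by (simp add: zero_fun_def)
  show ?thesis unfolding Wgood_def KerE_def z
  proof (intro conjI ballI allI)
    show "0 \<in> {f \<in> Agr d j. Emap d f = (0 :: (nat \<Rightarrow> nat) \<Rightarrow> 'k)}" using Agr_zero Emap_zero by auto
  next
    fix f g :: "(nat \<Rightarrow> nat) \<Rightarrow> 'k" assume "f \<in> {f \<in> Agr d j. Emap d f = 0}" "g \<in> {f \<in> Agr d j. Emap d f = 0}"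
    moreover have "Emap d (f + g) = Emap d f + Emap d g" by (rule Emap_add)
    ultimately show "f + g \<in> {f \<in> Agr d j. Emap d f = 0}" using Agr_add by auto
  next
    fix c and f :: "(nat \<Rightarrow> nat) \<Rightarrow> 'k" assume "f \<in> {f \<in> Agr d j. Emap d f = 0}"
    moreover have "Emap d (scF c f) = scF c (Emap d f)" by (rule Emap_scF)
    ultimately show "scF c f \<in> {f \<in> Agr d j. Emap d f = 0}" using Agr_scale
      by (auto simp: scF_def fun_eq_iff)
  next
    fix f :: "(nat \<Rightarrow> nat) \<Rightarrow> 'k" assume "f \<in> {f \<in> Agr d j. Emap d f = 0}"
    moreover have "Emap d (actA cy f) = actA cy (Emap d f)" by (rule Emap_act[OF cy_perm])
    moreover have "actA cy (0 :: (nat \<Rightarrow> nat) \<Rightarrow> 'k) = 0" by (rule actA_zero)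
    ultimately show "actA cy f \<in> {f \<in> Agr d j. Emap d f = 0}" using Agr_cy by auto
  qed
qed

lemma Xset_KerE: "Xset (KerE d j) = {f \<in> (Y d j :: ((nat \<Rightarrow> nat) \<Rightarrow> 'k::field) set). Emap d f = 0}"
  by (auto simp: Xset_def KerE_def Y_def zero_fun_def)

lemma st_eq: "st (K :: 'k::field_char_0 itself) d j = vF.dim {f \<in> (Y d j :: ((nat \<Rightarrow> nat) \<Rightarrow> 'k) set). Emap d f = 0}"
proof -
  define W :: "((nat \<Rightarrow> nat) \<Rightarrow> 'k) set" where "W = KerE d j"
  have sub: "vH.subspace (HomS3 W)" using Hom_subspace[OF Wgood_KerE] W_def by simp
  have sp: "vH.span (HomS3 W) = HomS3 W" using vH.span_eq_iff sub by blast
  have inj: "inj_on Phi (vH.span (HomS3 W))" unfolding sp by (rule Phi_inj)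
  have img: "Phi ` HomS3 W = Xset W"
  proof
    show "Phi ` HomS3 W \<subseteq> Xset W" using Phi_into by blast
    show "Xset W \<subseteq> Phi ` HomS3 W" unfolding W_def using Phi_onto[OF Wgood_KerE] by blast
  qed
  have X: "Xset W = {f \<in> (Y d j :: ((nat \<Rightarrow> nat) \<Rightarrow> 'k) set). Emap d f = 0}"
    unfolding W_def by (rule Xset_KerE)
  have "st K d j = vH.dim (HomS3 W)" unfolding st_def W_def scH_def by simp
  also have "\<dots> = vF.dim (Phi ` HomS3 W)" using vHF.dim_image_eq'[OF lin_Phi inj] by simp
  also have "\<dots> = vF.dim {f \<in> (Y d j :: ((nat \<Rightarrow> nat) \<Rightarrow> 'k) set). Emap d f = 0}"
    using img X by simp
  finally show ?thesis .
qed

theorem theorem3p3: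
  fixes K :: "'k::field_char_0 itself" and d j :: nat
  assumes "alg_closed K"
    and "d \<ge> 3"
    and "j \<le> (3 * (d - 1)) div 2"
  shows "real (st K d j) = real_of_int (mult d j - triv d j - sgn_mult d j) / 2"
proof -
  have d1: "d \<ge> 1" using assms(2) by simp
  have jj: "2 * j \<le> 3 * (d - 1)" using assms(3) by linarith
  have T: "Tset d n = Sn d n pT" for n by (auto simp: Tset_def Sn_def pT_def)
  have st: "int (st K d j) = int (card (Tset d (int j))) - int (card (Tset d (int j - 1)))"
    using st_eq[of K d j] dim_ker[OF jj] by simp
  have c1: "int (card (Sn d (int j) (\<lambda>a b c. True))) = 2 * int (card (Tset d (int j))) + int (p3 (d - 1) (int j)) + int (p3plus (d - 1) (int j))"
    using main_count[OF d1] T by simp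
  have c2: "int (card (Sn d (int j - 1) (\<lambda>a b c. True))) = 2 * int (card (Tset d (int j - 1))) + int (p3 (d - 1) (int j - 1)) + int (p3plus (d - 1) (int j - 1))"
    using main_count[OF d1] T by simp
  have m: "mult d j = int (card (Sn d (int j) (\<lambda>a b c. True))) - int (card (Sn d (int j - 1) (\<lambda>a b c. True)))"
    using mult_M[OF d1 assms(3)] .
  have "2 * int (st K d j) = mult d j - triv d j - sgn_mult d j"
    using st c1 c2 m by (simp add: triv_def sgn_mult_def)
  then have "real_of_int (2 * int (st K d j)) = real_of_int (mult d j - triv d j - sgn_mult d j)" by simp
  then show ?thesis by simp
qed

end
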